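(* Let $G$ be a large scale group whose large scale structure is induced by a Cayley metric $d$. Then $\mathrm{Ends}(G)$ is non-metrizable if and only if one of the following holds: (1) there is a bounded subset $B$ of $G$ such that the union of the bounded $1$-components of $G\setminus B$ is unbounded; (2) there is a bounded subset $B$ of $G$ such that $G\setminus B$ has infinitely many unbounded $1$-components.
   Context: A large scale group is a group $G$ with a bornology $\mathcal B$ (a cover of $G$ closed under subsets and finite unions) closed under inverses and products; uniformly bounded covers are those refining $\{gB\}_{g\in G}$ for some $B\in\mathcal B$, and bounded sets are members of $\mathcal B$. A Cayley graph of $G$ is a connected graph $\Gamma$ with vertex set $G$ whose graph metric is left-invariant and such that the inclusion $G\to\Gamma$ is a coarse equivalence; the restriction $d$ of its graph metric to $G$ is a Cayley metric (so $d$-bounded sets are exactly the bounded sets of $G$). The $1$-components of $A\subseteq G$ are the equivalence classes of $A$ under the relation "joined by a finite sequence in $A$ whose consecutive terms are at $d$-distance at most 1". For a uniformly bounded cover $\mathcal U$ and $A\subseteq G$, $st(A,\mathcal U)$ is the union of members of $\mathcal U$ meeting $A$. $A$ is coarsely clopen if $st(A,\mathcal U)\cap st(G\setminus A,\mathcal U)$ is bounded for every uniformly bounded $\mathcal U$. An end of $G$ is a family of unbounded coarsely clopen sets maximal with respect to all finite intersections being unbounded. $\mathrm{Ends}(G)$ is topologized by the basis consisting of the sets $U_{end}=\{E\in\mathrm{Ends}(G):U\in E\}$, $U$ ranging over coarsely clopen subsets of $G$. *)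

theory Defs
  imports "HOL-Algebra.Coset" "HOL-Analysis.Analysis"
begin

definition graph_dist :: "('a \<times> 'a) set \<Rightarrow> 'a \<Rightarrow> 'a \<Rightarrow> nat" where
  "graph_dist E x y = (LEAST n. (x, y) \<in> E ^^ n)"

text \<open>d is the restriction to G of the graph metric of a connected (simple, undirected)
  graph with vertex set G whose graph metric is left-invariant.\<close>
definition cayley_graph_metric :: "('a, 'b) monoid_scheme \<Rightarrow> ('a \<Rightarrow> 'a \<Rightarrow> nat) \<Rightarrow> bool" where
  "cayley_graph_metric G d \<longleftrightarrow>
     (\<exists>E. E \<subseteq> carrier G \<times> carrier G \<and> sym E \<and> irrefl E
        \<and> (\<forall>x\<in>carrier G. \<forall>y\<in>carrier G. (x, y) \<in> E\<^sup>*)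
        \<and> (\<forall>x\<in>carrier G. \<forall>y\<in>carrier G. d x y = graph_dist E x y))
     \<and> (\<forall>g\<in>carrier G. \<forall>x\<in>carrier G. \<forall>y\<in>carrier G. d (g \<otimes>\<^bsub>G\<^esub> x) (g \<otimes>\<^bsub>G\<^esub> y) = d x y)"

definition metric_bornology :: "('a, 'b) monoid_scheme \<Rightarrow> ('a \<Rightarrow> 'a \<Rightarrow> nat) \<Rightarrow> 'a set set" where
  "metric_bornology G d = {A. A \<subseteq> carrier G \<and> (\<exists>r. \<forall>x\<in>A. \<forall>y\<in>A. d x y \<le> r)}"

definition unif_bounded_cover :: "('a, 'b) monoid_scheme \<Rightarrow> 'a set set \<Rightarrow> 'a set set \<Rightarrow> bool" where
  "unif_bounded_cover G Bo \<U> \<longleftrightarrow> \<Union>\<U> = carrier G \<and>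
     (\<exists>B\<in>Bo. \<forall>U\<in>\<U>. \<exists>g\<in>carrier G. U \<subseteq> g <#\<^bsub>G\<^esub> B)"

definition star :: "'a set \<Rightarrow> 'a set set \<Rightarrow> 'a set" where
  "star A \<U> = \<Union>{U\<in>\<U>. U \<inter> A \<noteq> {}}"

definition coarsely_clopen :: "('a, 'b) monoid_scheme \<Rightarrow> 'a set set \<Rightarrow> 'a set \<Rightarrow> bool" where
  "coarsely_clopen G Bo A \<longleftrightarrow> A \<subseteq> carrier G \<and>
     (\<forall>\<U>. unif_bounded_cover G Bo \<U> \<longrightarrow> star A \<U> \<inter> star (carrier G - A) \<U> \<in> Bo)"

definition unbounded_fip :: "'a set set \<Rightarrow> 'a set set \<Rightarrow> bool" where
  "unbounded_fip Bo \<E> \<longleftrightarrow> (\<forall>\<F>. \<F> \<subseteq> \<E> \<and> finite \<F> \<and> \<F> \<noteq> {} \<longrightarrow> \<Inter>\<F> \<notin> Bo)"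

definition is_end :: "('a, 'b) monoid_scheme \<Rightarrow> 'a set set \<Rightarrow> 'a set set \<Rightarrow> bool" where
  "is_end G Bo \<E> \<longleftrightarrow>
     \<E> \<subseteq> {A. coarsely_clopen G Bo A \<and> A \<notin> Bo} \<and> unbounded_fip Bo \<E> \<and>
     (\<forall>\<E>'. \<E> \<subseteq> \<E>' \<and> \<E>' \<subseteq> {A. coarsely_clopen G Bo A \<and> A \<notin> Bo} \<and> unbounded_fip Bo \<E>'
            \<longrightarrow> \<E>' = \<E>)"

definition Ends :: "('a, 'b) monoid_scheme \<Rightarrow> 'a set set \<Rightarrow> 'a set set set" where
  "Ends G Bo = {\<E>. is_end G Bo \<E>}"

definition end_nbhd :: "('a, 'b) monoid_scheme \<Rightarrow> 'a set set \<Rightarrow> 'a set \<Rightarrow> 'a set set set" where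
  "end_nbhd G Bo U = {\<E> \<in> Ends G Bo. U \<in> \<E>}"

definition ends_topology :: "('a, 'b) monoid_scheme \<Rightarrow> 'a set set \<Rightarrow> 'a set set topology" where
  "ends_topology G Bo = topology_generated_by {end_nbhd G Bo U | U. coarsely_clopen G Bo U}"

definition one_components :: "('a \<Rightarrow> 'a \<Rightarrow> nat) \<Rightarrow> 'a set \<Rightarrow> 'a set set" where
  "one_components d A =
     (let R = {(x, y). x \<in> A \<and> y \<in> A \<and> d x y \<le> 1} in A // (R\<^sup>*))"

end

theory Submission
  imports Defs
begin


lemma relpow_conv_sym:
  assumes "sym E" "(x,y) \<in> E ^^ n" shows "(y,x) \<in> E ^^ n"
  using assms(2)
proof (induction n arbitrary: y)
  case 0 then show ?case by auto
next
  case (Suc n)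
  then obtain m where m: "(x,m) \<in> E^^n" "(m,y) \<in> E" by auto
  have "(y,m) \<in> E" using m(2) assms(1) by (meson symD)
  then show ?case using Suc.IH[OF m(1)] relpow_Suc_I2 by metis
qed

lemma relpow_exit:
  assumes "(x,y) \<in> E ^^ n" "x \<in> S" "y \<notin> S"
  shows "\<exists>a b k. k < n \<and> (x,a) \<in> E^^k \<and> (a,b) \<in> E \<and> a \<in> S \<and> b \<notin> S"
  using assms
proof (induction n arbitrary: y)
  case 0 then show ?case by auto
next
  case (Suc n)
  then obtain m where m: "(x,m) \<in> E^^n" "(m,y) \<in> E" by auto
  show ?case
  proof (cases "m \<in> S")
    case True then show ?thesis using m Suc.prems by blast
  next
    case False
    from Suc.IH[OF m(1) Suc.prems(2) False] show ?thesis using less_SucI by blast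
  qed
qed

locale LS =
  fixes G :: "('a,'b) monoid_scheme" and d :: "'a \<Rightarrow> 'a \<Rightarrow> nat" and E
  assumes grp: "group G"
   and Esub: "E \<subseteq> carrier G \<times> carrier G" and Esym: "sym E"
   and Econn: "\<forall>x\<in>carrier G. \<forall>y\<in>carrier G. (x,y) \<in> E\<^sup>*"
   and dE: "\<forall>x\<in>carrier G. \<forall>y\<in>carrier G. d x y = graph_dist E x y"
   and dinv: "\<forall>g\<in>carrier G. \<forall>x\<in>carrier G. \<forall>y\<in>carrier G. d (g \<otimes>\<^bsub>G\<^esub> x) (g \<otimes>\<^bsub>G\<^esub> y) = d x y"
begin

abbreviation V where "V \<equiv> carrier G"
abbreviation Bo where "Bo \<equiv> metric_bornology G d"
abbreviation e0 where "e0 \<equiv> \<one>\<^bsub>G\<^esub>"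

lemma o_in: "e0 \<in> V" using grp by (simp add: group.is_monoid monoid.one_closed)

lemma d_path: "x \<in> V \<Longrightarrow> y \<in> V \<Longrightarrow> (x,y) \<in> E ^^ (d x y)"
proof -
  assume xy: "x \<in> V" "y \<in> V"
  then have "\<exists>n. (x,y) \<in> E^^n" using Econn rtrancl_power by blast
  then have "(x,y) \<in> E ^^ (LEAST n. (x,y) \<in> E^^n)" by (rule LeastI_ex)
  then show ?thesis using dE xy by (simp add: graph_dist_def)
qed

lemma d_le: "x \<in> V \<Longrightarrow> y \<in> V \<Longrightarrow> (x,y) \<in> E ^^ n \<Longrightarrow> d x y \<le> n"
  using dE by (simp add: graph_dist_def Least_le)

lemma d_refl [simp]: "x \<in> V \<Longrightarrow> d x x = 0"
  using d_le[of x x 0] by simp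

lemma d_zero: "x \<in> V \<Longrightarrow> y \<in> V \<Longrightarrow> d x y = 0 \<Longrightarrow> x = y"
  using d_path[of x y] by auto

lemma d_sym: "x \<in> V \<Longrightarrow> y \<in> V \<Longrightarrow> d x y = d y x"
  using d_path d_le relpow_conv_sym[OF Esym] by (meson le_antisym)

lemma d_tri: "x \<in> V \<Longrightarrow> y \<in> V \<Longrightarrow> z \<in> V \<Longrightarrow> d x z \<le> d x y + d y z"
proof -
  assume a: "x \<in> V" "y \<in> V" "z \<in> V"
  have "(x,z) \<in> E ^^ (d x y + d y z)"
    using d_path[of x y] d_path[of y z] a relpow_add by blast
  then show ?thesis using d_le a by blast
qed

lemma d_edge: "(x,y) \<in> E \<Longrightarrow> d x y \<le> 1"
  using Esub d_le[of x y 1] by auto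

lemma bdd_iff: "A \<in> Bo \<longleftrightarrow> A \<subseteq> V \<and> (\<exists>R. \<forall>x\<in>A. d e0 x \<le> R)"
proof
  assume A: "A \<in> Bo"
  then obtain r where r: "A \<subseteq> V" "\<forall>x\<in>A. \<forall>y\<in>A. d x y \<le> r" by (auto simp: metric_bornology_def)
  show "A \<subseteq> V \<and> (\<exists>R. \<forall>x\<in>A. d e0 x \<le> R)"
  proof (cases "A = {}")
    case True then show ?thesis by auto
  next
    case False
    then obtain a where a: "a \<in> A" by auto
    have "\<forall>x\<in>A. d e0 x \<le> d e0 a + r"
      using d_tri[of e0 a] r a o_in by (meson add_le_mono le_refl order_trans subsetD)
    then show ?thesis using r by blast
  qed
next
  assume "A \<subseteq> V \<and> (\<exists>R. \<forall>x\<in>A. d e0 x \<le> R)"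
  then obtain R where R: "A \<subseteq> V" "\<forall>x\<in>A. d e0 x \<le> R" by blast
  have "\<forall>x\<in>A. \<forall>y\<in>A. d x y \<le> R + R"
  proof (intro ballI)
    fix x y assume xy: "x \<in> A" "y \<in> A"
    have "d x y \<le> d x e0 + d e0 y" using d_tri R(1) xy o_in by blast
    also have "\<dots> = d e0 x + d e0 y" using d_sym R(1) xy o_in by auto
    finally show "d x y \<le> R + R" using R xy by (meson add_le_mono order_trans)
  qed
  then show "A \<in> Bo" using R by (auto simp: metric_bornology_def)
qed

lemma bdd_sub: "A \<in> Bo \<Longrightarrow> A' \<subseteq> A \<Longrightarrow> A' \<in> Bo"
  by (auto simp: metric_bornology_def) (meson subsetD)

lemma bdd_Un: "A \<in> Bo \<Longrightarrow> A' \<in> Bo \<Longrightarrow> A \<union> A' \<in> Bo"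
proof -
  assume "A \<in> Bo" "A' \<in> Bo"
  then obtain R R' where "A \<subseteq> V" "A' \<subseteq> V" "\<forall>x\<in>A. d e0 x \<le> R" "\<forall>x\<in>A'. d e0 x \<le> R'"
    by (auto simp: bdd_iff)
  then have "\<forall>x\<in>A \<union> A'. d e0 x \<le> max R R'" by fastforce
  then show ?thesis using \<open>A \<subseteq> V\<close> \<open>A' \<subseteq> V\<close> bdd_iff by blast
qed

lemma bdd_empty [simp]: "{} \<in> Bo" by (simp add: bdd_iff)

lemma bdd_Union: "finite K \<Longrightarrow> (\<And>A. A \<in> K \<Longrightarrow> A \<in> Bo) \<Longrightarrow> \<Union>K \<in> Bo"
  by (induction K rule: finite_induct) (simp_all add: bdd_Un)

definition nb :: "nat \<Rightarrow> 'a set \<Rightarrow> 'a set" where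
  "nb r S = {z \<in> V. \<exists>s\<in>S. d z s \<le> r}"

lemma nb_bdd: "A \<in> Bo \<Longrightarrow> nb r A \<in> Bo"
proof -
  assume "A \<in> Bo"
  then obtain R where R: "A \<subseteq> V" "\<forall>x\<in>A. d e0 x \<le> R" by (auto simp: bdd_iff)
  have "\<forall>z\<in>nb r A. d e0 z \<le> R + r"
  proof
    fix z assume "z \<in> nb r A"
    then obtain s where s: "z \<in> V" "s \<in> A" "d z s \<le> r" by (auto simp: nb_def)
    have "d e0 z \<le> d e0 s + d s z" using d_tri o_in s R(1) by blast
    also have "d s z = d z s" using d_sym s R(1) by auto
    finally show "d e0 z \<le> R + r" using R s by (meson add_le_mono order_trans)
  qed
  then show ?thesis by (auto simp: bdd_iff nb_def)
qed

definition ball :: "'a \<Rightarrow> nat \<Rightarrow> 'a set" where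
  "ball g r = {x \<in> V. d g x \<le> r}"

lemma ball_bdd: "g \<in> V \<Longrightarrow> ball g r \<in> Bo"
proof -
  assume g: "g \<in> V"
  have "ball g r \<subseteq> nb r {g}"
  proof
    fix x assume "x \<in> ball g r"
    then have "x \<in> V" "d g x \<le> r" by (auto simp: ball_def)
    then show "x \<in> nb r {g}" using d_sym[of g x] g by (simp add: nb_def)
  qed
  moreover have "{g} \<in> Bo" using g by (auto simp: bdd_iff)
  ultimately show ?thesis using bdd_sub nb_bdd by blast
qed

lemma cc_iff: "coarsely_clopen G Bo A \<longleftrightarrow> A \<subseteq> V \<and> (\<forall>r. nb r A \<inter> nb r (V - A) \<in> Bo)"
proof
  assume cc: "coarsely_clopen G Bo A"
  show "A \<subseteq> V \<and> (\<forall>r. nb r A \<inter> nb r (V - A) \<in> Bo)"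
  proof (intro conjI allI)
    show "A \<subseteq> V" using cc by (simp add: coarsely_clopen_def)
    fix r
    define U where "U = {ball g r | g. g \<in> V}"
    have ubc: "unif_bounded_cover G Bo U"
      unfolding unif_bounded_cover_def
    proof
      show "\<Union>U = V"
      proof
        show "\<Union> U \<subseteq> V" by (auto simp: U_def ball_def)
        show "V \<subseteq> \<Union> U"
        proof
          fix x assume x: "x \<in> V"
          then have "ball x r \<in> U" "x \<in> ball x r" by (auto simp: U_def ball_def)
          then show "x \<in> \<Union>U" by blast
        qed
      qed
      show "\<exists>B\<in>Bo. \<forall>U\<in>U. \<exists>g\<in>V. U \<subseteq> g <#\<^bsub>G\<^esub> B"
      proof (intro bexI[of _ "ball e0 r"] ballI)
        fix W assume "W \<in> U"
        then obtain g where g: "g \<in> V" "W = ball g r" by (auto simp: U_def)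
        have "W \<subseteq> g <#\<^bsub>G\<^esub> ball e0 r"
        proof
          fix x assume "x \<in> W"
          then have x: "x \<in> V" "d g x \<le> r" using g by (auto simp: ball_def)
          define h where "h = inv\<^bsub>G\<^esub> g \<otimes>\<^bsub>G\<^esub> x"
          interpret Gr: group G by (rule grp)
          have hV: "h \<in> V" using g x by (simp add: h_def)
          have "g \<otimes>\<^bsub>G\<^esub> h = (g \<otimes>\<^bsub>G\<^esub> inv\<^bsub>G\<^esub> g) \<otimes>\<^bsub>G\<^esub> x"
            using g x unfolding h_def by (metis Gr.inv_closed Gr.m_assoc)
          then have gh: "g \<otimes>\<^bsub>G\<^esub> h = x" using g x by simp
          have "d e0 h = d (g \<otimes>\<^bsub>G\<^esub> e0) (g \<otimes>\<^bsub>G\<^esub> h)" using dinv[rule_format, OF g(1) o_in hV] by (rule sym)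
          also have "\<dots> = d g x" using gh g by simp
          finally have "h \<in> ball e0 r" using hV x by (simp add: ball_def)
          then show "x \<in> g <#\<^bsub>G\<^esub> ball e0 r" using gh by (auto simp: l_coset_def)
        qed
        then show "\<exists>g\<in>V. W \<subseteq> g <#\<^bsub>G\<^esub> ball e0 r" using g by blast
      qed (rule ball_bdd[OF o_in])
    qed
    have sub: "nb r A \<inter> nb r (V - A) \<subseteq> star A U \<inter> star (V - A) U"
    proof
      fix z assume "z \<in> nb r A \<inter> nb r (V - A)"
      then obtain a b where ab: "z \<in> V" "a \<in> A" "d z a \<le> r" "b \<in> V - A" "d z b \<le> r"
        by (auto simp: nb_def)
      have aV: "a \<in> V" using ab \<open>A \<subseteq> V\<close> by auto
      have bV: "b \<in> V" using ab by simp
      have dza: "d z a \<le> r" and dzb: "d z b \<le> r" using ab by auto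
      have W: "ball z r \<in> U" "z \<in> ball z r" "a \<in> ball z r" "b \<in> ball z r"
        unfolding U_def ball_def using ab(1) aV bV dza dzb by auto
      show "z \<in> star A U \<inter> star (V - A) U" unfolding star_def using W ab(2,4) by blast
    qed
    have "star A U \<inter> star (V - A) U \<in> Bo" using cc ubc by (simp add: coarsely_clopen_def)
    then show "nb r A \<inter> nb r (V - A) \<in> Bo" using sub bdd_sub by blast
  qed
next
  assume a: "A \<subseteq> V \<and> (\<forall>r. nb r A \<inter> nb r (V - A) \<in> Bo)"
  show "coarsely_clopen G Bo A"
    unfolding coarsely_clopen_def
  proof (intro conjI allI impI)
    show "A \<subseteq> V" using a by simp
    fix U assume "unif_bounded_cover G Bo U"
    then obtain B where B: "\<Union>U = V" "B \<in> Bo" "\<forall>W\<in>U. \<exists>g\<in>V. W \<subseteq> g <#\<^bsub>G\<^esub> B"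
      unfolding unif_bounded_cover_def by blast
    obtain D where D: "B \<subseteq> V" "\<forall>x\<in>B. \<forall>y\<in>B. d x y \<le> D" using B(2) unfolding metric_bornology_def by blast
    have diam: "d x y \<le> D" if wxy: "W \<in> U" "x \<in> W" "y \<in> W" for W x y
    proof -
      obtain g where g: "g \<in> V" "W \<subseteq> g <#\<^bsub>G\<^esub> B"
        using B(3)[rule_format, OF wxy(1)] by (elim bexE)
      have xg: "x \<in> (\<Union>h\<in>B. {g \<otimes>\<^bsub>G\<^esub> h})" using g(2) wxy(2) unfolding l_coset_def by (rule subsetD)
      have yg: "y \<in> (\<Union>h\<in>B. {g \<otimes>\<^bsub>G\<^esub> h})" using g(2) wxy(3) unfolding l_coset_def by (rule subsetD)
      obtain b1 where b1: "b1 \<in> B" "x = g \<otimes>\<^bsub>G\<^esub> b1" using xg by (elim UN_E) simp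
      obtain b2 where b2: "b2 \<in> B" "y = g \<otimes>\<^bsub>G\<^esub> b2" using yg by (elim UN_E) simp
      note b = b1(1) b2(1) b1(2) b2(2)
      have bV: "b1 \<in> V" "b2 \<in> V" using b(1,2) D(1) by auto
      have "d x y = d b1 b2" unfolding b(3,4) by (rule dinv[rule_format, OF g(1) bV])
      then show ?thesis using D(2) b(1,2) by simp
    qed
    have "star A U \<inter> star (V - A) U \<subseteq> nb D A \<inter> nb D (V - A)"
    proof
      fix z assume "z \<in> star A U \<inter> star (V - A) U"
      then obtain W1 W2 a b where w: "W1 \<in> U" "z \<in> W1" "a \<in> W1" "a \<in> A" "W2 \<in> U" "z \<in> W2" "b \<in> W2" "b \<in> V - A"
        by (auto simp: star_def)
      have "z \<in> \<Union>U" using w(1,2) by blast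
      then have zV: "z \<in> V" using B(1) by simp
      have "d z a \<le> D" by (rule diam[OF w(1,2,3)])
      moreover have "d z b \<le> D" by (rule diam[OF w(5,6,7)])
      ultimately show "z \<in> nb D A \<inter> nb D (V - A)" using zV w(4,8) unfolding nb_def by blast
    qed
    then show "star A U \<inter> star (V - A) U \<in> Bo" using a bdd_sub by blast
  qed
qed

end


context LS begin

definition RR :: "'a set \<Rightarrow> ('a \<times> 'a) set" where
  "RR S = {(x, y). x \<in> S \<and> y \<in> S \<and> d x y \<le> 1}"

lemma comps_def': "one_components d S = S // (RR S)\<^sup>*"
  by (simp add: one_components_def RR_def)

lemma comp_mem: "C \<in> one_components d S \<longleftrightarrow> (\<exists>x\<in>S. C = (RR S)\<^sup>* `` {x})"
  unfolding comps_def' quotient_def by blast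

lemma RR_rt: "(x,y) \<in> (RR S)\<^sup>* \<Longrightarrow> x = y \<or> (x \<in> S \<and> y \<in> S)"
  by (induction rule: rtrancl_induct) (auto simp: RR_def)

lemma RR_sym: "S \<subseteq> V \<Longrightarrow> (x,y) \<in> (RR S)\<^sup>* \<Longrightarrow> (y,x) \<in> (RR S)\<^sup>*"
proof -
  assume S: "S \<subseteq> V"
  have "sym (RR S)" unfolding sym_def RR_def
  proof (intro allI impI)
    fix a b assume "(a, b) \<in> {(x, y). x \<in> S \<and> y \<in> S \<and> d x y \<le> 1}"
    then have ab: "a \<in> S" "b \<in> S" "d a b \<le> 1" by auto
    have "d b a = d a b" using d_sym[of b a] ab S by blast
    then show "(b, a) \<in> {(x, y). x \<in> S \<and> y \<in> S \<and> d x y \<le> 1}" using ab by simp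
  qed
  then have "sym ((RR S)\<^sup>*)" by (rule sym_rtrancl)
  then show "(x,y) \<in> (RR S)\<^sup>* \<Longrightarrow> (y,x) \<in> (RR S)\<^sup>*" by (meson symD)
qed

lemma comp_sub: "C \<in> one_components d S \<Longrightarrow> C \<subseteq> S"
  unfolding comp_mem using RR_rt by blast

lemma comp_of: "x \<in> S \<Longrightarrow> \<exists>C\<in>one_components d S. x \<in> C"
proof -
  assume x: "x \<in> S"
  have "(RR S)\<^sup>* `` {x} \<in> one_components d S" unfolding comp_mem using x by blast
  moreover have "x \<in> (RR S)\<^sup>* `` {x}" by simp
  ultimately show ?thesis by blast
qed

lemma comp_closed:
  assumes "C \<in> one_components d S" "x \<in> C" "y \<in> S" "d x y \<le> 1"
  shows "y \<in> C"
proof -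
  obtain x0 where x0: "x0 \<in> S" "C = (RR S)\<^sup>* `` {x0}" using assms(1) comp_mem by blast
  have "x \<in> S" using assms comp_sub by blast
  then have "(x,y) \<in> RR S" using assms by (simp add: RR_def)
  moreover have "(x0,x) \<in> (RR S)\<^sup>*" using assms(2) x0(2) by simp
  ultimately have "(x0,y) \<in> (RR S)\<^sup>*" by (simp add: rtrancl_into_rtrancl)
  then show ?thesis using x0(2) by simp
qed

lemma comp_disj:
  assumes "S \<subseteq> V" "C \<in> one_components d S" "C' \<in> one_components d S" "z \<in> C" "z \<in> C'"
  shows "C = C'"
proof -
  obtain x where x: "x \<in> S" "C = (RR S)\<^sup>* `` {x}" using assms(2) comp_mem by blast
  obtain y where y: "y \<in> S" "C' = (RR S)\<^sup>* `` {y}" using assms(3) comp_mem by blast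
  have "(x,z) \<in> (RR S)\<^sup>*" "(y,z) \<in> (RR S)\<^sup>*" using assms x y by auto
  then have xy: "(x,y) \<in> (RR S)\<^sup>*" using RR_sym[OF assms(1)] by (meson rtrancl_trans)
  then have yx: "(y,x) \<in> (RR S)\<^sup>*" using RR_sym[OF assms(1)] by blast
  show ?thesis unfolding x(2) y(2)
  proof (intro equalityI subsetI)
    fix v
    assume "v \<in> (RR S)\<^sup>* `` {x}"
    then show "v \<in> (RR S)\<^sup>* `` {y}" using rtrancl_trans[OF yx, of v] by simp
  next
    fix v
    assume "v \<in> (RR S)\<^sup>* `` {y}"
    then show "v \<in> (RR S)\<^sup>* `` {x}" using rtrancl_trans[OF xy, of v] by simp
  qed
qed

lemma comp_side:
  assumes "C \<in> one_components d S"
    and "\<And>x y. x \<in> C \<Longrightarrow> y \<in> C \<Longrightarrow> d x y \<le> 1 \<Longrightarrow> (x \<in> A \<longleftrightarrow> y \<in> A)"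
  shows "C \<subseteq> A \<or> C \<inter> A = {}"
proof -
  obtain x0 where x0: "x0 \<in> S" "C = (RR S)\<^sup>* `` {x0}" using assms(1) comp_mem by blast
  have "(x0,y) \<in> (RR S)\<^sup>* \<Longrightarrow> (y \<in> A \<longleftrightarrow> x0 \<in> A)" for y
  proof (induction rule: rtrancl_induct)
    case base then show ?case by simp
  next
    case (step y z)
    have "y \<in> C" "z \<in> C" using step x0 by auto
    moreover have "d y z \<le> 1" using step by (simp add: RR_def)
    ultimately show ?case using assms(2) step.IH by blast
  qed
  then show ?thesis using x0 by blast
qed

lemma nb_mono: "X \<subseteq> Y \<Longrightarrow> nb r X \<subseteq> nb r Y"
  unfolding nb_def by blast

lemma nb_Un: "nb r (X \<union> Y) = nb r X \<union> nb r Y"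
  unfolding nb_def by blast

lemma cc_compl: "coarsely_clopen G Bo A \<Longrightarrow> coarsely_clopen G Bo (V - A)"
proof -
  assume a: "coarsely_clopen G Bo A"
  then have "A \<subseteq> V" by (simp add: cc_iff)
  then have "V - (V - A) = A" by blast
  then show ?thesis using a unfolding cc_iff by (simp add: Int_commute)
qed

lemma cc_inter:
  assumes "coarsely_clopen G Bo A" "coarsely_clopen G Bo A'"
  shows "coarsely_clopen G Bo (A \<inter> A')"
  unfolding cc_iff
proof (intro conjI allI)
  show "A \<inter> A' \<subseteq> V" using assms by (auto simp: cc_iff)
  fix r
  have "nb r (A \<inter> A') \<inter> nb r (V - A \<inter> A') \<subseteq> (nb r A \<inter> nb r (V - A)) \<union> (nb r A' \<inter> nb r (V - A'))"
  proof -
    have "V - A \<inter> A' = (V - A) \<union> (V - A')" by blast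
    then have "nb r (V - A \<inter> A') = nb r (V - A) \<union> nb r (V - A')" by (simp add: nb_Un)
    moreover have "nb r (A \<inter> A') \<subseteq> nb r A" "nb r (A \<inter> A') \<subseteq> nb r A'" by (rule nb_mono; blast)+
    ultimately show ?thesis by blast
  qed
  moreover have "(nb r A \<inter> nb r (V - A)) \<union> (nb r A' \<inter> nb r (V - A')) \<in> Bo"
    using assms by (simp add: cc_iff bdd_Un)
  ultimately show "nb r (A \<inter> A') \<inter> nb r (V - A \<inter> A') \<in> Bo" by (rule bdd_sub[rotated])
qed

lemma cc_V: "coarsely_clopen G Bo V"
  unfolding cc_iff by (simp add: nb_def)

lemma cc_union_comps:
  assumes B: "B \<in> Bo" and K: "K \<subseteq> one_components d (V - B)"
  shows "coarsely_clopen G Bo (\<Union>K)"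
  unfolding cc_iff
proof (intro conjI allI)
  have BV: "B \<subseteq> V" using B by (simp add: bdd_iff)
  show WV: "\<Union>K \<subseteq> V" using K comp_sub by blast
  fix r
  have "nb r (\<Union>K) \<inter> nb r (V - \<Union>K) \<subseteq> nb r B"
  proof
    fix z assume "z \<in> nb r (\<Union>K) \<inter> nb r (V - \<Union>K)"
    then obtain w u where zwu: "z \<in> V" "w \<in> \<Union>K" "d z w \<le> r" "u \<in> V" "u \<notin> \<Union>K" "d z u \<le> r"
      unfolding nb_def by blast
    have wV: "w \<in> V" using zwu(2) WV by blast
    show "z \<in> nb r B"
    proof (cases "z \<in> \<Union>K")
      case True
      have p: "(z,u) \<in> E ^^ d z u" using d_path zwu by blast
      obtain a b k where abk: "k < d z u" "(z,a) \<in> E^^k" "(a,b) \<in> E" "a \<in> \<Union>K" "b \<notin> \<Union>K"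
        using relpow_exit[OF p True zwu(5)] by blast
      have aV: "a \<in> V" "b \<in> V" using abk(3) Esub by auto
      obtain C where C: "C \<in> K" "a \<in> C" using abk(4) by blast
      have "b \<in> B"
      proof (rule ccontr)
        assume "b \<notin> B"
        then have "b \<in> C" using comp_closed[of C "V - B" a b] C K aV d_edge[OF abk(3)] by blast
        then show False using C abk(5) by blast
      qed
      have "d z a \<le> k" using d_le abk(2) zwu(1) aV by blast
      moreover have "d z b \<le> d z a + d a b" using d_tri zwu(1) aV by blast
      moreover have "d a b \<le> 1" using d_edge abk(3) by blast
      ultimately have "d z b \<le> r" using abk(1) zwu(6) by linarith
      then show ?thesis using \<open>b \<in> B\<close> zwu(1) unfolding nb_def by blast
    next
      case False
      then have zS: "z \<in> V - \<Union>K" using zwu(1) by blast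
      have wS: "w \<notin> V - \<Union>K" using zwu(2) by blast
      have p: "(z,w) \<in> E ^^ d z w" using d_path zwu wV by blast
      obtain a b k where abk: "k < d z w" "(z,a) \<in> E^^k" "(a,b) \<in> E" "a \<in> V - \<Union>K" "b \<notin> V - \<Union>K"
        using relpow_exit[OF p zS wS] by blast
      have aV: "a \<in> V" "b \<in> V" using abk(3) Esub by auto
      then have "b \<in> \<Union>K" using abk(5) by blast
      then obtain C where C: "C \<in> K" "b \<in> C" by blast
      have "a \<in> B"
      proof (rule ccontr)
        assume "a \<notin> B"
        have "d b a = d a b" using d_sym[of b a] aV by blast
        then have "d b a \<le> 1" using d_edge[OF abk(3)] by simp
        then have "a \<in> C" using comp_closed[of C "V - B" b a] C K aV \<open>a \<notin> B\<close> by blast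
        then show False using C abk(4) by blast
      qed
      have "d z a \<le> k" using d_le abk(2) zwu(1) aV by blast
      then have "d z a \<le> r" using abk(1) zwu(3) by linarith
      then show ?thesis using \<open>a \<in> B\<close> zwu(1) unfolding nb_def by blast
    qed
  qed
  then show "nb r (\<Union>K) \<inter> nb r (V - \<Union>K) \<in> Bo" using nb_bdd[OF B] bdd_sub by blast
qed

end


context LS begin

abbreviation CCU where "CCU \<equiv> {A. coarsely_clopen G Bo A \<and> A \<notin> Bo}"

lemma end_mem: "is_end G Bo F \<Longrightarrow> A \<in> F \<Longrightarrow> coarsely_clopen G Bo A \<and> A \<notin> Bo \<and> A \<subseteq> V"
proof -
  assume "is_end G Bo F" "A \<in> F"
  then have "coarsely_clopen G Bo A \<and> A \<notin> Bo" unfolding is_end_def by blast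
  then show ?thesis by (simp add: coarsely_clopen_def)
qed

lemma end_fip: "is_end G Bo F \<Longrightarrow> H \<subseteq> F \<Longrightarrow> finite H \<Longrightarrow> H \<noteq> {} \<Longrightarrow> \<Inter>H \<notin> Bo"
  unfolding is_end_def unbounded_fip_def by blast

lemma end_add:
  assumes F: "is_end G Bo F" and X: "coarsely_clopen G Bo X"
    and H: "\<And>H. H \<subseteq> F \<Longrightarrow> finite H \<Longrightarrow> \<Inter>H \<inter> X \<notin> Bo"
  shows "X \<in> F"
proof -
  have XU: "X \<notin> Bo" using H[of "{}"] by simp
  have "unbounded_fip Bo (insert X F)"
    unfolding unbounded_fip_def
  proof (intro allI impI)
    fix K assume K: "K \<subseteq> insert X F \<and> finite K \<and> K \<noteq> {}"
    show "\<Inter>K \<notin> Bo"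
    proof (cases "X \<in> K")
      case True
      have e: "\<Inter>K = \<Inter>(K - {X}) \<inter> X" using True by blast
      have "K - {X} \<subseteq> F" "finite (K - {X})" using K by auto
      then have "\<Inter>(K - {X}) \<inter> X \<notin> Bo" using H by blast
      then show ?thesis using e by simp
    next
      case False
      then have "K \<subseteq> F" using K by blast
      then show ?thesis using end_fip[OF F] K by blast
    qed
  qed
  moreover have "insert X F \<subseteq> CCU" using F X XU unfolding is_end_def by blast
  moreover have "F \<subseteq> insert X F" by blast
  ultimately have "insert X F = F" using F unfolding is_end_def by blast
  then show ?thesis by blast
qed

lemma chain_finite_sub:
  assumes ch: "chain\<^sub>\<subseteq> C" and ne: "C \<noteq> {}"
  shows "finite H \<Longrightarrow> H \<subseteq> \<Union>C \<Longrightarrow> \<exists>X\<in>C. H \<subseteq> X"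
proof (induction H rule: finite_induct)
  case empty then show ?case using ne by blast
next
  case (insert h H)
  then obtain X where X: "X \<in> C" "H \<subseteq> X" by blast
  obtain Y where Y: "Y \<in> C" "h \<in> Y" using insert.prems by blast
  have "X \<subseteq> Y \<or> Y \<subseteq> X" using ch X(1) Y(1) unfolding chain_subset_def by blast
  then show ?case using X Y by blast
qed

lemma zorn_end:
  assumes F0: "F0 \<subseteq> CCU" "unbounded_fip Bo F0"
  shows "\<exists>F. is_end G Bo F \<and> F0 \<subseteq> F"
proof -
  define AA where "AA = {F. F0 \<subseteq> F \<and> F \<subseteq> CCU \<and> unbounded_fip Bo F}"
  have "\<forall>C\<in>chains AA. \<exists>U\<in>AA. \<forall>X\<in>C. X \<subseteq> U"
  proof
    fix C assume C: "C \<in> chains AA"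
    then have CA: "C \<subseteq> AA" and ch: "chain\<^sub>\<subseteq> C" by (auto simp: chains_def)
    show "\<exists>U\<in>AA. \<forall>X\<in>C. X \<subseteq> U"
    proof (cases "C = {}")
      case True
      have "F0 \<in> AA" using assms unfolding AA_def by blast
      then show ?thesis using True by blast
    next
      case False
      have "\<Union>C \<in> AA" unfolding AA_def
      proof (intro CollectI conjI)
        show "F0 \<subseteq> \<Union>C" using False CA unfolding AA_def by blast
        show "\<Union>C \<subseteq> CCU" using CA unfolding AA_def by blast
        show "unbounded_fip Bo (\<Union>C)" unfolding unbounded_fip_def
        proof (intro allI impI)
          fix H assume H: "H \<subseteq> \<Union>C \<and> finite H \<and> H \<noteq> {}"
          then obtain X where X: "X \<in> C" "H \<subseteq> X" using chain_finite_sub[OF ch False] by blast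
          then have "unbounded_fip Bo X" using CA unfolding AA_def by blast
          then show "\<Inter>H \<notin> Bo" using X H unfolding unbounded_fip_def by blast
        qed
      qed
      then show ?thesis by blast
    qed
  qed
  then obtain M where M: "M \<in> AA" "\<forall>X\<in>AA. M \<subseteq> X \<longrightarrow> X = M" using Zorn_Lemma2[of AA] by blast
  have "is_end G Bo M" unfolding is_end_def
  proof (intro conjI allI impI)
    show "M \<subseteq> CCU" using M(1) unfolding AA_def by blast
    show "unbounded_fip Bo M" using M(1) unfolding AA_def by blast
    fix E' assume E': "M \<subseteq> E' \<and> E' \<subseteq> CCU \<and> unbounded_fip Bo E'"
    then have "E' \<in> AA" using M(1) unfolding AA_def by blast
    then show "E' = M" using M(2) E' by blast
  qed
  then show ?thesis using M(1) unfolding AA_def by blast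
qed

lemma end_V: assumes "V \<notin> Bo" "is_end G Bo F" shows "V \<in> F"
proof (rule end_add[OF assms(2) cc_V])
  fix H assume H: "H \<subseteq> F" "finite H"
  show "\<Inter>H \<inter> V \<notin> Bo"
  proof (cases "H = {}")
    case True then show ?thesis using assms(1) by simp
  next
    case False
    have "\<Inter>H \<subseteq> V" using False H end_mem[OF assms(2)] by blast
    then have "\<Inter>H \<inter> V = \<Inter>H" by blast
    then show ?thesis using end_fip[OF assms(2) H False] by simp
  qed
qed

lemma end_int: assumes F: "is_end G Bo F" and A: "A \<in> F" "A' \<in> F" shows "A \<inter> A' \<in> F"
proof (rule end_add[OF F])
  show "coarsely_clopen G Bo (A \<inter> A')" using end_mem[OF F] A cc_inter by blast
  fix H assume H: "H \<subseteq> F" "finite H"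
  have "\<Inter>H \<inter> (A \<inter> A') = \<Inter>(insert A (insert A' H))" by auto
  moreover have "\<Inter>(insert A (insert A' H)) \<notin> Bo" by (rule end_fip[OF F]) (use H A in auto)
  ultimately show "\<Inter>H \<inter> (A \<inter> A') \<notin> Bo" by simp
qed

lemma end_up:
  assumes F: "is_end G Bo F" and A: "A \<in> F" and A': "coarsely_clopen G Bo A'" and D: "A - A' \<in> Bo"
  shows "A' \<in> F"
proof (rule end_add[OF F A'])
  fix H assume H: "H \<subseteq> F" "finite H"
  show "\<Inter>H \<inter> A' \<notin> Bo"
  proof
    assume b: "\<Inter>H \<inter> A' \<in> Bo"
    have "\<Inter>(insert A H) \<subseteq> (\<Inter>H \<inter> A') \<union> (A - A')" by auto
    moreover have "(\<Inter>H \<inter> A') \<union> (A - A') \<in> Bo" using b D bdd_Un by blast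
    ultimately have "\<Inter>(insert A H) \<in> Bo" using bdd_sub by blast
    moreover have "\<Inter>(insert A H) \<notin> Bo" by (rule end_fip[OF F]) (use H A in auto)
    ultimately show False by blast
  qed
qed

lemma end_disj:
  assumes F: "is_end G Bo F" and A: "A \<in> F" "A' \<in> F" and b: "A \<inter> A' \<in> Bo"
  shows False
proof -
  have "\<Inter>{A, A'} \<notin> Bo" using end_fip[OF F, of "{A, A'}"] A by simp
  then show False using b by simp
qed

lemma end_dich:
  assumes VU: "V \<notin> Bo" and F: "is_end G Bo F" and A: "coarsely_clopen G Bo A"
  shows "A \<in> F \<or> V - A \<in> F"
proof (rule ccontr)
  assume n: "\<not> (A \<in> F \<or> V - A \<in> F)"
  have AV: "A \<subseteq> V" using A by (simp add: coarsely_clopen_def)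
  obtain H1 where H1: "H1 \<subseteq> F" "finite H1" "\<Inter>H1 \<inter> A \<in> Bo"
    using end_add[OF F A] n by blast
  obtain H2 where H2: "H2 \<subseteq> F" "finite H2" "\<Inter>H2 \<inter> (V - A) \<in> Bo"
    using end_add[OF F cc_compl[OF A]] n by blast
  have sub: "\<Inter>(H1 \<union> H2) \<inter> V \<subseteq> (\<Inter>H1 \<inter> A) \<union> (\<Inter>H2 \<inter> (V - A))" by auto
  have bd: "\<Inter>(H1 \<union> H2) \<inter> V \<in> Bo" using bdd_sub[OF bdd_Un[OF H1(3) H2(3)] sub] .
  show False
  proof (cases "H1 \<union> H2 = {}")
    case True then show False using bd VU by simp
  next
    case False
    have "\<Inter>(H1 \<union> H2) \<subseteq> V" using False H1(1) H2(1) end_mem[OF F] by blast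
    then have "\<Inter>(H1 \<union> H2) \<inter> V = \<Inter>(H1 \<union> H2)" by blast
    moreover have "\<Inter>(H1 \<union> H2) \<notin> Bo" using end_fip[OF F _ _ False] H1 H2 by blast
    ultimately show False using bd by simp
  qed
qed

lemma end_ne:
  assumes F: "is_end G Bo F" and F': "is_end G Bo F'" and ne: "F \<noteq> F'"
  shows "\<exists>A\<in>F. A \<notin> F'"
proof (rule ccontr)
  assume "\<not> (\<exists>A\<in>F. A \<notin> F')"
  then have "F \<subseteq> F'" by blast
  moreover have "F' \<subseteq> CCU" "unbounded_fip Bo F'" using F' unfolding is_end_def by auto
  ultimately have "F' = F" using F unfolding is_end_def by blast
  then show False using ne by simp
qed

lemma exists_end_sep:
  assumes U: "coarsely_clopen G Bo U" and A: "coarsely_clopen G Bo A" and nb: "U - A \<notin> Bo"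
  shows "\<exists>F. is_end G Bo F \<and> U \<in> F \<and> A \<notin> F"
proof -
  have UV: "U \<subseteq> V" using U by (simp add: coarsely_clopen_def)
  have eq: "U \<inter> (V - A) = U - A" using UV by blast
  have X: "coarsely_clopen G Bo (U - A)" using cc_inter[OF U cc_compl[OF A]] eq by simp
  have fip: "unbounded_fip Bo {U - A}" unfolding unbounded_fip_def
  proof (intro allI impI)
    fix H assume "H \<subseteq> {U - A} \<and> finite H \<and> H \<noteq> {}"
    then have "H = {U - A}" by blast
    then show "\<Inter>H \<notin> Bo" using nb by simp
  qed
  obtain F where F: "is_end G Bo F" "{U - A} \<subseteq> F" using zorn_end[OF _ fip] X nb by blast
  have "U - A \<in> F" using F by blast
  have e: "U - A - U = {}" by blast
  have "U \<in> F" by (rule end_up[OF F(1) \<open>U - A \<in> F\<close> U]) (simp only: e bdd_empty)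
  moreover have "A \<notin> F"
  proof
    assume AF: "A \<in> F"
    have e2: "(U - A) \<inter> A = {}" by blast
    show False by (rule end_disj[OF F(1) \<open>U - A \<in> F\<close> AF]) (simp only: e2 bdd_empty)
  qed
  ultimately show ?thesis using F by blast
qed

lemma end_nbhd_mono:
  assumes U: "coarsely_clopen G Bo U" and A: "coarsely_clopen G Bo A"
    and s: "end_nbhd G Bo U \<subseteq> end_nbhd G Bo A"
  shows "U - A \<in> Bo"
proof (rule ccontr)
  assume "U - A \<notin> Bo"
  then obtain F where F: "is_end G Bo F" "U \<in> F" "A \<notin> F" using exists_end_sep[OF U A] by blast
  then have "F \<in> end_nbhd G Bo U" by (simp add: end_nbhd_def Ends_def)
  then show False using s F(3) by (auto simp: end_nbhd_def)
qed

lemma open_basic: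
  assumes "openin (ends_topology G Bo) Op"
  shows "\<forall>F\<in>Op. \<exists>U. coarsely_clopen G Bo U \<and> F \<in> end_nbhd G Bo U \<and> end_nbhd G Bo U \<subseteq> Op"
proof -
  have "generate_topology_on {end_nbhd G Bo U | U. coarsely_clopen G Bo U} Op"
    using assms unfolding ends_topology_def by (rule openin_topology_generated_by)
  then show ?thesis
  proof (induction rule: generate_topology_on.induct)
    case Empty then show ?case by simp
  next
    case (Int a b)
    show ?case
    proof
      fix F assume "F \<in> a \<inter> b"
      then obtain U1 U2 where U: "coarsely_clopen G Bo U1" "F \<in> end_nbhd G Bo U1" "end_nbhd G Bo U1 \<subseteq> a"
        "coarsely_clopen G Bo U2" "F \<in> end_nbhd G Bo U2" "end_nbhd G Bo U2 \<subseteq> b"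
        using Int.IH by blast
      have Fe: "is_end G Bo F" "U1 \<in> F" "U2 \<in> F" using U by (auto simp: end_nbhd_def Ends_def)
      have c: "coarsely_clopen G Bo (U1 \<inter> U2)" using U cc_inter by blast
      have "F \<in> end_nbhd G Bo (U1 \<inter> U2)" using end_int[OF Fe] Fe(1) by (simp add: end_nbhd_def Ends_def)
      moreover have "end_nbhd G Bo (U1 \<inter> U2) \<subseteq> end_nbhd G Bo U1 \<inter> end_nbhd G Bo U2"
      proof
        fix F' assume "F' \<in> end_nbhd G Bo (U1 \<inter> U2)"
        then have F': "is_end G Bo F'" "U1 \<inter> U2 \<in> F'" by (auto simp: end_nbhd_def Ends_def)
        have e1: "U1 \<inter> U2 - U1 = {}" "U1 \<inter> U2 - U2 = {}" by auto
        have "U1 \<in> F'" by (rule end_up[OF F' U(1)]) (simp_all only: e1 bdd_empty)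
        moreover have "U2 \<in> F'" by (rule end_up[OF F' U(4)]) (simp_all only: e1 bdd_empty)
        ultimately show "F' \<in> end_nbhd G Bo U1 \<inter> end_nbhd G Bo U2" using F'(1) by (simp add: end_nbhd_def Ends_def)
      qed
      ultimately show "\<exists>U. coarsely_clopen G Bo U \<and> F \<in> end_nbhd G Bo U \<and> end_nbhd G Bo U \<subseteq> a \<inter> b"
        using c U(3,6) by blast
    qed
  next
    case (UN K)
    show ?case
    proof
      fix F assume "F \<in> \<Union>K"
      then obtain k where k: "k \<in> K" "F \<in> k" by blast
      then obtain U where "coarsely_clopen G Bo U" "F \<in> end_nbhd G Bo U" "end_nbhd G Bo U \<subseteq> k"
        using UN.IH by blast
      then show "\<exists>U. coarsely_clopen G Bo U \<and> F \<in> end_nbhd G Bo U \<and> end_nbhd G Bo U \<subseteq> \<Union>K"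
        using k by blast
    qed
  next
    case (Basis s)
    then show ?case by blast
  qed
qed

end


context LS begin

lemma unbdd_far: "X \<subseteq> V \<Longrightarrow> X \<notin> Bo \<Longrightarrow> \<exists>x\<in>X. d e0 x > R"
proof (rule ccontr)
  assume a: "X \<subseteq> V" "X \<notin> Bo" "\<not> (\<exists>x\<in>X. d e0 x > R)"
  then have "\<forall>x\<in>X. d e0 x \<le> R" by (simp add: not_less)
  then have "X \<in> Bo" unfolding bdd_iff using a(1) by blast
  then show False using a(2) by simp
qed

lemma far_unbdd: "(\<And>R. \<exists>x\<in>X. d e0 x > R) \<Longrightarrow> X \<notin> Bo"
proof
  assume a: "\<And>R. \<exists>x\<in>X. d e0 x > R" and "X \<in> Bo"
  then obtain R where "\<forall>x\<in>X. d e0 x \<le> R" unfolding bdd_iff by blast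
  moreover obtain x where "x \<in> X" "d e0 x > R" using a by blast
  ultimately show False by fastforce
qed

lemma split_lemma:
  fixes c :: "nat \<Rightarrow> 'a set" and S :: "nat \<Rightarrow> 'a set"
  assumes cV: "\<And>n. c n \<subseteq> V"
    and h: "\<And>k m. S k \<inter> \<Union>(c ` {m..}) \<notin> Bo"
  shows "\<exists>I. \<forall>k. S k \<inter> \<Union>(c ` I) \<notin> Bo \<and> S k \<inter> \<Union>(c ` (- I)) \<notin> Bo"
proof -
  define P where "P m s n \<longleftrightarrow> n \<ge> m \<and> (\<exists>x\<in>S (fst (prod_decode (s div 2))) \<inter> c n. d e0 x > snd (prod_decode (s div 2)))" for m s n
  have ex: "\<exists>n. P m s n" for m s
  proof -
    let ?k = "fst (prod_decode (s div 2))" and ?R = "snd (prod_decode (s div 2))"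
    have sub: "S ?k \<inter> \<Union>(c ` {m..}) \<subseteq> V" using cV by blast
    obtain x where x: "x \<in> S ?k \<inter> \<Union>(c ` {m..})" "d e0 x > ?R" using unbdd_far[OF sub h] by blast
    then obtain n where n: "n \<in> {m..}" "x \<in> c n" by blast
    have "P m s n" unfolding P_def using x n by auto
    then show ?thesis by blast
  qed
  define f where "f m s = (SOME n. P m s n)" for m s
  have fP: "P m s (f m s)" for m s unfolding f_def using ex by (rule someI_ex)
  define nn where "nn = rec_nat (f 0 0) (\<lambda>s ns. f (Suc ns) (Suc s))"
  have nn0: "nn 0 = f 0 0" and nnS: "nn (Suc s) = f (Suc (nn s)) (Suc s)" for s
    by (simp_all add: nn_def)
  have Pn: "\<exists>m. P m s (nn s)" for s
  proof (cases s)
    case 0 then show ?thesis using fP[of 0 0] nn0 by metis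
  next
    case (Suc s') then show ?thesis using fP[of "Suc (nn s')" s] nnS[of s'] by metis
  qed
  have "nn s < nn (Suc s)" for s using fP[of "Suc (nn s)" "Suc s"] nnS[of s] unfolding P_def by simp
  then have sm: "strict_mono nn" by (simp add: strict_mono_Suc_iff)
  define I where "I = nn ` {s. even s}"
  have pick: "\<exists>x\<in>S k \<inter> c (nn s). d e0 x > R" if "s div 2 = prod_encode (k, R)" for s k R
  proof -
    obtain m where "P m s (nn s)" using Pn by blast
    then show ?thesis unfolding P_def using that by simp
  qed
  have "S k \<inter> \<Union>(c ` I) \<notin> Bo \<and> S k \<inter> \<Union>(c ` (- I)) \<notin> Bo" for k
  proof
    show "S k \<inter> \<Union>(c ` I) \<notin> Bo"
    proof (rule far_unbdd)
      fix R
      define t where "t = prod_encode (k, R)"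
      let ?s = "2 * t"
      have sd: "?s div 2 = prod_encode (k, R)" unfolding t_def[symmetric] by simp
      obtain x where x: "x \<in> S k \<inter> c (nn ?s)" "d e0 x > R" using pick[OF sd] by blast
      have "nn ?s \<in> I" unfolding I_def by (rule imageI) simp
      then have "x \<in> S k \<inter> \<Union>(c ` I)" using x(1) by blast
      then show "\<exists>x\<in>S k \<inter> \<Union>(c ` I). d e0 x > R" using x(2) by blast
    qed
    show "S k \<inter> \<Union>(c ` (- I)) \<notin> Bo"
    proof (rule far_unbdd)
      fix R
      define t where "t = prod_encode (k, R)"
      let ?s = "2 * t + 1"
      have sd: "?s div 2 = prod_encode (k, R)" unfolding t_def[symmetric] by simp
      obtain x where x: "x \<in> S k \<inter> c (nn ?s)" "d e0 x > R" using pick[OF sd] by blast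
      have "nn ?s \<notin> I"
      proof
        assume "nn ?s \<in> I"
        then obtain s' where s': "s' \<in> {s. even s}" "nn ?s = nn s'" unfolding I_def by (rule imageE)
        from s'(2) have "?s = s'" unfolding strict_mono_eq[OF sm] .
        then have "even ?s" using s'(1) by simp
        moreover have "odd ?s" by simp
        ultimately show False by blast
      qed
      then have "nn ?s \<in> - I" by simp
      then have "c (nn ?s) \<in> c ` (- I)" by (rule imageI)
      moreover have "x \<in> c (nn ?s)" using x(1) by simp
      ultimately have "x \<in> \<Union>(c ` (- I))" by (rule UnionI)
      then have "x \<in> S k \<inter> \<Union>(c ` (- I))" using x(1) by simp
      then show "\<exists>x\<in>S k \<inter> \<Union>(c ` (- I)). d e0 x > R" using x(2) by (rule bexI[rotated])
    qed
  qed
  then show ?thesis by blast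
qed

end


context LS begin

lemma topspace_ends: "topspace (ends_topology G Bo) = \<Union>{end_nbhd G Bo U | U. coarsely_clopen G Bo U}"
  unfolding ends_topology_def by (rule topology_generated_by_topspace)

lemma basic_open: "coarsely_clopen G Bo U \<Longrightarrow> openin (ends_topology G Bo) (end_nbhd G Bo U)"
  unfolding ends_topology_def by (rule topology_generated_by_Basis) blast

lemma not_metr:
  fixes c :: "nat \<Rightarrow> 'a set"
  assumes VU: "V \<notin> Bo" and B: "B \<in> Bo" and c1: "\<And>n. c n \<in> one_components d (V - B)"
    and inj: "inj c" and c3: "\<And>m. \<Union>(c ` {m..}) \<notin> Bo"
  shows "\<not> metrizable_space (ends_topology G Bo)"
proof
  assume metr: "metrizable_space (ends_topology G Bo)"
  define W where "W I = \<Union>(c ` I)" for I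
  have BV: "B \<subseteq> V" using B by (simp add: bdd_iff)
  have cV: "c n \<subseteq> V" for n using comp_sub[OF c1[of n]] by blast
  have WV: "W I \<subseteq> V" for I unfolding W_def using cV by blast
  have Wcc: "coarsely_clopen G Bo (W I)" for I
    unfolding W_def by (rule cc_union_comps[OF B]) (use c1 in blast)
  have Wdisj: "W I \<inter> W J = {}" if IJ: "I \<inter> J = {}" for I J
  proof (rule ccontr)
    assume "W I \<inter> W J \<noteq> {}"
    then obtain z i j where z: "i \<in> I" "z \<in> c i" "j \<in> J" "z \<in> c j" unfolding W_def by blast
    have "c i = c j" using comp_disj[OF _ c1 c1 z(2) z(4)] by blast
    then have "i = j" using inj by (simp add: inj_eq)
    then show False using IJ z(1,3) by blast
  qed
  have Wmono: "I \<subseteq> J \<Longrightarrow> W I \<subseteq> W J" for I J unfolding W_def by blast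
  define F0 where "F0 = range (\<lambda>m. W {m..})"
  have F0C: "F0 \<subseteq> CCU"
  proof
    fix X assume "X \<in> F0"
    then obtain m where m: "X = W {m..}" unfolding F0_def by blast
    have "W {m..} \<notin> Bo" unfolding W_def by (rule c3)
    then show "X \<in> CCU" using Wcc[of "{m..}"] m by simp
  qed
  have F0fip: "unbounded_fip Bo F0" unfolding unbounded_fip_def
  proof (intro allI impI)
    fix H assume H: "H \<subseteq> F0 \<and> finite H \<and> H \<noteq> {}"
    then obtain Ms where Ms: "finite Ms" "H = (\<lambda>m. W {m..}) ` Ms"
      unfolding F0_def using finite_subset_image[of H "\<lambda>m. W {m..}" UNIV] by blast
    have Mne: "Ms \<noteq> {}" using Ms H by blast
    define M where "M = Max Ms"
    have "W {M..} \<subseteq> \<Inter>H"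
    proof
      fix x assume x: "x \<in> W {M..}"
      show "x \<in> \<Inter>H"
      proof
        fix h assume "h \<in> H"
        then obtain m where m: "m \<in> Ms" "h = W {m..}" using Ms(2) by blast
        have "m \<le> M" unfolding M_def using Ms(1) m(1) by simp
        then have "W {M..} \<subseteq> W {m..}" by (intro Wmono) auto
        then show "x \<in> h" using x m(2) by blast
      qed
    qed
    moreover have "W {M..} \<notin> Bo" unfolding W_def by (rule c3)
    ultimately show "\<Inter>H \<notin> Bo" using bdd_sub by blast
  qed
  obtain Fs where Fs: "is_end G Bo Fs" "F0 \<subseteq> Fs" using zorn_end[OF F0C F0fip] by blast
  have WFs: "W {m..} \<in> Fs" for m using Fs(2) unfolding F0_def by blast
  have FsN: "Fs \<in> end_nbhd G Bo V" using end_V[OF VU Fs(1)] Fs(1) by (simp add: end_nbhd_def Ends_def)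
  have Fstop: "Fs \<in> topspace (ends_topology G Bo)" unfolding topspace_ends using FsN cc_V by blast
  have fc: "first_countable (ends_topology G Bo)" using metr by (rule metrizable_imp_first_countable)
  have "\<exists>Bs. countable Bs \<and> (\<forall>Q\<in>Bs. openin (ends_topology G Bo) Q) \<and>
    (\<forall>Op. openin (ends_topology G Bo) Op \<and> Fs \<in> Op \<longrightarrow> (\<exists>Q\<in>Bs. Fs \<in> Q \<and> Q \<subseteq> Op))"
    by (rule bspec[OF fc[unfolded first_countable_def] Fstop])
  then obtain Bs where Bs: "countable Bs" "\<forall>Q\<in>Bs. openin (ends_topology G Bo) Q"
    "\<forall>Op. openin (ends_topology G Bo) Op \<and> Fs \<in> Op \<longrightarrow> (\<exists>Q\<in>Bs. Fs \<in> Q \<and> Q \<subseteq> Op)"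
    by (elim exE conjE) (intro that)
  define Bs' where "Bs' = {Q\<in>Bs. Fs \<in> Q}"
  have Bs'c: "countable Bs'" using Bs(1) unfolding Bs'_def by simp
  have Bs'ne: "Bs' \<noteq> {}"
  proof -
    have "\<exists>Q\<in>Bs. Fs \<in> Q \<and> Q \<subseteq> topspace (ends_topology G Bo)"
      by (rule Bs(3)[rule_format]) (simp add: Fstop)
    then obtain Q where "Q \<in> Bs" "Fs \<in> Q" by blast
    then show ?thesis unfolding Bs'_def by blast
  qed
  define Uf where "Uf Q = (SOME U. coarsely_clopen G Bo U \<and> Fs \<in> end_nbhd G Bo U \<and> end_nbhd G Bo U \<subseteq> Q)" for Q
  have Uf: "coarsely_clopen G Bo (Uf Q) \<and> Fs \<in> end_nbhd G Bo (Uf Q) \<and> end_nbhd G Bo (Uf Q) \<subseteq> Q" if QB: "Q \<in> Bs'" for Q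
  proof -
    have QB': "Q \<in> Bs" "Fs \<in> Q" using QB unfolding Bs'_def by auto
    have oQ: "openin (ends_topology G Bo) Q" using Bs(2) QB'(1) by (rule bspec)
    have "\<exists>U. coarsely_clopen G Bo U \<and> Fs \<in> end_nbhd G Bo U \<and> end_nbhd G Bo U \<subseteq> Q"
      using open_basic[OF oQ] QB'(2) by (rule bspec)
    then show ?thesis unfolding Uf_def by (rule someI_ex)
  qed
  define Uk where "Uk k = Uf (from_nat_into Bs' k)" for k
  have Uk: "coarsely_clopen G Bo (Uk k) \<and> Uk k \<in> Fs" for k
  proof -
    have "from_nat_into Bs' k \<in> Bs'" by (rule from_nat_into[OF Bs'ne])
    then have "coarsely_clopen G Bo (Uk k) \<and> Fs \<in> end_nbhd G Bo (Uk k)" unfolding Uk_def using Uf by blast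
    then show ?thesis unfolding end_nbhd_def by blast
  qed
  have Ukbase: "\<exists>k. end_nbhd G Bo (Uk k) \<subseteq> Op" if oOp: "openin (ends_topology G Bo) Op" "Fs \<in> Op" for Op
  proof -
    have "\<exists>Q\<in>Bs. Fs \<in> Q \<and> Q \<subseteq> Op" using Bs(3) oOp by blast
    then obtain Q where Q: "Q \<in> Bs" "Fs \<in> Q" "Q \<subseteq> Op" by blast
    then have Q': "Q \<in> Bs'" unfolding Bs'_def by blast
    have "range (from_nat_into Bs') = Bs'" by (rule range_from_nat_into[OF Bs'ne Bs'c])
    then have "Q \<in> range (from_nat_into Bs')" using Q' by simp
    then obtain k where k: "Q = from_nat_into Bs' k" by (rule rangeE)
    have "end_nbhd G Bo (Uf Q) \<subseteq> Q" using Uf[OF Q'] by blast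
    then have "end_nbhd G Bo (Uk k) \<subseteq> Q" unfolding Uk_def k[symmetric] .
    then show ?thesis using Q(3) by blast
  qed
  have hUW: "Uk k \<inter> \<Union>(c ` {m..}) \<notin> Bo" for k m
  proof -
    have "Uk k \<inter> W {m..} \<in> Fs" using end_int[OF Fs(1)] Uk WFs by blast
    then have "Uk k \<inter> W {m..} \<notin> Bo" using end_mem[OF Fs(1)] by blast
    then show ?thesis unfolding W_def .
  qed
  obtain I where I0: "\<forall>k. Uk k \<inter> \<Union>(c ` I) \<notin> Bo \<and> Uk k \<inter> \<Union>(c ` (- I)) \<notin> Bo"
    using split_lemma[of c Uk, OF cV hUW] by blast
  have I: "\<And>k. Uk k \<inter> W I \<notin> Bo" "\<And>k. Uk k \<inter> W (- I) \<notin> Bo" unfolding W_def using I0 by auto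
  have WU: "W UNIV \<in> Fs" using WFs[of 0] by simp
  have eqc: "W UNIV \<inter> (V - W I) = W (- I)"
  proof (intro equalityI subsetI)
    fix x assume x: "x \<in> W UNIV \<inter> (V - W I)"
    then obtain n where n: "x \<in> c n" unfolding W_def by blast
    have "n \<notin> I"
    proof
      assume "n \<in> I"
      then have "x \<in> W I" using n unfolding W_def by blast
      then show False using x by blast
    qed
    then show "x \<in> W (- I)" using n unfolding W_def by blast
  next
    fix x assume x: "x \<in> W (- I)"
    have "x \<in> W UNIV" using x Wmono[of "- I" UNIV] by blast
    moreover have "x \<in> V" using x WV by blast
    moreover have "x \<notin> W I" using x Wdisj[of I "- I"] by blast
    ultimately show "x \<in> W UNIV \<inter> (V - W I)" by blast
  qed
  have "\<exists>A A'. A \<in> Fs \<and> coarsely_clopen G Bo A \<and> A \<inter> A' = {} \<and> (\<forall>k. Uk k \<inter> A' \<notin> Bo)"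
  proof (cases "W I \<in> Fs")
    case True
    then show ?thesis using Wcc Wdisj[of I "- I"] I(2) by blast
  next
    case False
    then have "V - W I \<in> Fs" using end_dich[OF VU Fs(1) Wcc] by blast
    then have "W UNIV \<inter> (V - W I) \<in> Fs" by (rule end_int[OF Fs(1) WU])
    then have "W (- I) \<in> Fs" unfolding eqc .
    moreover have "W (- I) \<inter> W I = {}" using Wdisj[of "- I" I] by blast
    ultimately show ?thesis using Wcc I(1) by blast
  qed
  then obtain A A' where A: "A \<in> Fs" "coarsely_clopen G Bo A" "A \<inter> A' = {}" "\<And>k. Uk k \<inter> A' \<notin> Bo" by blast
  have "Fs \<in> end_nbhd G Bo A" using A(1) Fs(1) by (simp add: end_nbhd_def Ends_def)
  then obtain k where k: "end_nbhd G Bo (Uk k) \<subseteq> end_nbhd G Bo A" using Ukbase basic_open[OF A(2)] by blast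
  have "Uk k - A \<in> Bo" using end_nbhd_mono[OF _ A(2) k] Uk by blast
  moreover have "Uk k \<inter> A' \<subseteq> Uk k - A" using A(3) by blast
  ultimately have "Uk k \<inter> A' \<in> Bo" using bdd_sub by blast
  then show False using A(4) by blast
qed

end


locale LSN = LS +
  assumes VU: "carrier G \<notin> metric_bornology G d"
    and n1: "\<forall>B\<in>metric_bornology G d. \<Union>{C \<in> one_components d (carrier G - B). C \<in> metric_bornology G d} \<in> metric_bornology G d"
    and n2: "\<forall>B\<in>metric_bornology G d. finite {C \<in> one_components d (carrier G - B). C \<notin> metric_bornology G d}"
begin

definition Cn where "Cn n = one_components d (V - ball e0 n)"
definition UC where "UC n = {C \<in> Cn n. C \<notin> Bo}"
definition diffl where "diffl F F' n \<longleftrightarrow> (\<exists>C\<in>UC n. (C \<in> F) \<noteq> (C \<in> F'))"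
definition dd where "dd F F' = (if \<exists>n. diffl F F' n then inverse (real (Suc (LEAST n. diffl F F' n))) else 0)"

lemma Bn_bdd: "ball e0 n \<in> Bo" by (rule ball_bdd[OF o_in])

lemma UC_fin: "finite (UC n)"
  using n2 Bn_bdd unfolding UC_def Cn_def by blast

lemma Cn_sub: "C \<in> Cn n \<Longrightarrow> C \<subseteq> V - ball e0 n"
  unfolding Cn_def by (rule comp_sub)

lemma comp_cc: "C \<in> Cn n \<Longrightarrow> coarsely_clopen G Bo C"
proof -
  assume C: "C \<in> Cn n"
  have "coarsely_clopen G Bo (\<Union>{C})"
    by (rule cc_union_comps[OF Bn_bdd]) (use C in \<open>simp add: Cn_def\<close>)
  then show ?thesis by simp
qed

lemma level:
  assumes A: "coarsely_clopen G Bo A"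
  shows "\<exists>n. \<forall>C\<in>Cn n. C \<subseteq> A \<or> C \<inter> A = {}"
proof -
  have AV: "A \<subseteq> V" using A by (simp add: coarsely_clopen_def)
  have "nb 1 A \<inter> nb 1 (V - A) \<in> Bo" using A cc_iff by blast
  then obtain R where R: "\<forall>x\<in>nb 1 A \<inter> nb 1 (V - A). d e0 x \<le> R" unfolding bdd_iff by blast
  have key: "y \<in> A" if xy: "x \<in> C" "y \<in> C" "d x y \<le> 1" "x \<in> A" and C: "C \<in> Cn R" for C x y
  proof (rule ccontr)
    assume yA: "y \<notin> A"
    have CS: "C \<subseteq> V - ball e0 R" using Cn_sub[OF C] .
    have xV: "x \<in> V" "y \<in> V" using CS xy by auto
    have "x \<in> nb 1 A" unfolding nb_def using xV xy(4) by force
    moreover have "x \<in> nb 1 (V - A)" unfolding nb_def using xV xy(3) yA by blast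
    ultimately have "d e0 x \<le> R" using R by blast
    then have "x \<in> ball e0 R" unfolding ball_def using xV by simp
    then show False using CS xy(1) by blast
  qed
  have "\<forall>C\<in>Cn R. C \<subseteq> A \<or> C \<inter> A = {}"
  proof
    fix C assume C: "C \<in> Cn R"
    show "C \<subseteq> A \<or> C \<inter> A = {}"
    proof (rule comp_side)
      show "C \<in> one_components d (V - ball e0 R)" using C by (simp add: Cn_def)
      fix x y assume xy: "x \<in> C" "y \<in> C" "d x y \<le> 1"
      have xV: "x \<in> V" "y \<in> V" using Cn_sub[OF C] xy by auto
      have "d y x = d x y" using d_sym[of y x] xV by blast
      then have yx: "d y x \<le> 1" using xy(3) by simp
      show "x \<in> A \<longleftrightarrow> y \<in> A" using key[OF xy _ C] key[OF xy(2) xy(1) yx _ C] by blast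
    qed
  qed
  then show ?thesis by blast
qed

lemma contain:
  assumes F: "is_end G Bo F" and A: "A \<in> F" and lv: "\<forall>C\<in>Cn n. C \<subseteq> A \<or> C \<inter> A = {}"
  shows "\<exists>C\<in>UC n. C \<subseteq> A \<and> C \<in> F"
proof (rule ccontr)
  assume no: "\<not> (\<exists>C\<in>UC n. C \<subseteq> A \<and> C \<in> F)"
  define K where "K = {C \<in> UC n. C \<subseteq> A}"
  have Kfin: "finite K" unfolding K_def using UC_fin by simp
  have AV: "A \<subseteq> V" using end_mem[OF F A] by blast
  have KV: "V - C \<in> F" if "C \<in> K" for C
  proof -
    have C: "C \<in> Cn n" "C \<notin> F" using that no unfolding K_def UC_def by auto
    show ?thesis using end_dich[OF VU F comp_cc[OF C(1)]] C(2) by blast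
  qed
  define H where "H = insert A ((\<lambda>C. V - C) ` K)"
  have HF: "H \<subseteq> F" unfolding H_def using A KV by blast
  have Hfin: "finite H" unfolding H_def using Kfin by simp
  have Hne: "H \<noteq> {}" unfolding H_def by simp
  have sub: "\<Inter>H \<subseteq> ball e0 n \<union> \<Union>{C \<in> Cn n. C \<in> Bo}"
  proof
    fix x assume x: "x \<in> \<Inter>H"
    have xA: "x \<in> A" using x unfolding H_def by blast
    have xK: "x \<notin> C" if "C \<in> K" for C
    proof -
      have "V - C \<in> H" unfolding H_def using that by blast
      then show ?thesis using x by blast
    qed
    show "x \<in> ball e0 n \<union> \<Union>{C \<in> Cn n. C \<in> Bo}"
    proof (cases "x \<in> ball e0 n")
      case True then show ?thesis by blast
    next
      case False
      then have "x \<in> V - ball e0 n" using xA AV by blast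
      then obtain C where C: "C \<in> Cn n" "x \<in> C" using comp_of unfolding Cn_def by blast
      have "C \<subseteq> A" using lv C xA by blast
      have "C \<in> Bo"
      proof (rule ccontr)
        assume "C \<notin> Bo"
        then have "C \<in> K" unfolding K_def UC_def using C(1) \<open>C \<subseteq> A\<close> by blast
        then show False using xK C(2) by blast
      qed
      then show ?thesis using C by blast
    qed
  qed
  have "ball e0 n \<union> \<Union>{C \<in> Cn n. C \<in> Bo} \<in> Bo"
    using bdd_Un[OF Bn_bdd] n1 Bn_bdd unfolding Cn_def by blast
  then have "\<Inter>H \<in> Bo" using sub bdd_sub by blast
  then show False using end_fip[OF F HF Hfin Hne] by blast
qed

lemma diffl_sym: "diffl F F' n = diffl F' F n"
  unfolding diffl_def by metis

lemma dd_sym: "dd F F' = dd F' F"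
proof -
  have "diffl F F' = diffl F' F" using diffl_sym by blast
  then show ?thesis unfolding dd_def by simp
qed

lemma dd_nonneg: "0 \<le> dd F F'"
  unfolding dd_def by simp

lemma dd_ge: assumes "diffl F F' n" shows "inverse (real (Suc n)) \<le> dd F F'"
proof -
  have ex: "\<exists>n. diffl F F' n" using assms by blast
  have "(LEAST n. diffl F F' n) \<le> n" using assms by (rule Least_le)
  then have "inverse (real (Suc n)) \<le> inverse (real (Suc (LEAST n. diffl F F' n)))"
    by (simp add: le_imp_inverse_le)
  then show ?thesis unfolding dd_def using ex by simp
qed

lemma dd_small: assumes "\<forall>m\<le>n. \<not> diffl F F' m" shows "dd F F' < inverse (real (Suc n))"
proof (cases "\<exists>m. diffl F F' m")
  case False
  then have "dd F F' = 0" unfolding dd_def by simp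
  then show ?thesis by simp
next
  case True
  define m where "m = (LEAST m. diffl F F' m)"
  have "diffl F F' m" unfolding m_def using True by (rule LeastI_ex)
  then have "n < m" using assms by (meson not_le)
  then have "inverse (real (Suc m)) < inverse (real (Suc n))"
    by (simp add: less_imp_inverse_less)
  then show ?thesis unfolding dd_def m_def using True by simp
qed

lemma dd_tri: "dd F F'' \<le> dd F F' + dd F' F''"
proof (cases "\<exists>m. diffl F F'' m")
  case False
  then have "dd F F'' = 0" unfolding dd_def by simp
  then show ?thesis using dd_nonneg[of F F'] dd_nonneg[of F' F''] by simp
next
  case True
  define m where "m = (LEAST m. diffl F F'' m)"
  have dm: "diffl F F'' m" unfolding m_def using True by (rule LeastI_ex)
  have e: "dd F F'' = inverse (real (Suc m))" unfolding dd_def m_def using True by simp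
  have "diffl F F' m \<or> diffl F' F'' m" using dm unfolding diffl_def by blast
  then show ?thesis
  proof
    assume "diffl F F' m"
    then have "dd F F'' \<le> dd F F'" using dd_ge e by simp
    then show ?thesis using dd_nonneg[of F' F''] by simp
  next
    assume "diffl F' F'' m"
    then have "dd F F'' \<le> dd F' F''" using dd_ge e by simp
    then show ?thesis using dd_nonneg[of F F'] by simp
  qed
qed

lemma ends_differ: assumes F: "is_end G Bo F" and F': "is_end G Bo F'" and ne: "F \<noteq> F'"
  shows "\<exists>n. diffl F F' n"
proof -
  obtain A where A: "A \<in> F" "A \<notin> F'" using end_ne[OF F F' ne] by blast
  have Acc: "coarsely_clopen G Bo A" using end_mem[OF F A(1)] by blast
  have VA: "V - A \<in> F'" using end_dich[OF VU F' Acc] A(2) by blast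
  obtain n where n: "\<forall>C\<in>Cn n. C \<subseteq> A \<or> C \<inter> A = {}" using level[OF Acc] by blast
  obtain C where C: "C \<in> UC n" "C \<subseteq> A" "C \<in> F" using contain[OF F A(1) n] by blast
  have "C \<notin> F'"
  proof
    assume "C \<in> F'"
    have e: "C \<inter> (V - A) = {}" using C(2) by blast
    show False by (rule end_disj[OF F' \<open>C \<in> F'\<close> VA]) (simp only: e bdd_empty)
  qed
  then have "diffl F F' n" unfolding diffl_def using C by blast
  then show ?thesis by blast
qed

lemma ms: "Metric_space (Ends G Bo) dd"
proof
  fix x y z
  show "0 \<le> dd x y" by (rule dd_nonneg)
  show "dd x y = dd y x" by (rule dd_sym)
  show "x \<in> Ends G Bo \<Longrightarrow> y \<in> Ends G Bo \<Longrightarrow> dd x y = 0 \<longleftrightarrow> x = y"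
  proof -
    assume xy: "x \<in> Ends G Bo" "y \<in> Ends G Bo"
    show "dd x y = 0 \<longleftrightarrow> x = y"
    proof
      assume "dd x y = 0"
      show "x = y"
      proof (rule ccontr)
        assume "x \<noteq> y"
        then obtain n where "diffl x y n" using ends_differ xy unfolding Ends_def by blast
        then have "inverse (real (Suc n)) \<le> dd x y" by (rule dd_ge)
        moreover have "0 < inverse (real (Suc n))" by simp
        ultimately show False using \<open>dd x y = 0\<close> by simp
      qed
    next
      assume "x = y"
      then show "dd x y = 0" unfolding dd_def diffl_def by simp
    qed
  qed
  show "x \<in> Ends G Bo \<Longrightarrow> y \<in> Ends G Bo \<Longrightarrow> z \<in> Ends G Bo \<Longrightarrow> dd x z \<le> dd x y + dd y z"
    by (rule dd_tri)
qed

end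


context LSN begin

lemma topspace_eq: "topspace (ends_topology G Bo) = Ends G Bo"
proof
  show "topspace (ends_topology G Bo) \<subseteq> Ends G Bo"
    unfolding topspace_ends end_nbhd_def by blast
  show "Ends G Bo \<subseteq> topspace (ends_topology G Bo)"
  proof
    fix F assume F: "F \<in> Ends G Bo"
    then have "V \<in> F" using end_V[OF VU] unfolding Ends_def by blast
    then have "F \<in> end_nbhd G Bo V" using F unfolding end_nbhd_def by blast
    then show "F \<in> topspace (ends_topology G Bo)" unfolding topspace_ends using cc_V by blast
  qed
qed

lemma nbhd_in_ball:
  assumes F: "is_end G Bo F" and U: "coarsely_clopen G Bo U" and UF: "U \<in> F"
  shows "\<exists>n. \<forall>F'. is_end G Bo F' \<and> dd F F' < inverse (real (Suc n)) \<longrightarrow> U \<in> F'"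
proof -
  obtain n where n: "\<forall>C\<in>Cn n. C \<subseteq> U \<or> C \<inter> U = {}" using level[OF U] by blast
  obtain C where C: "C \<in> UC n" "C \<subseteq> U" "C \<in> F" using contain[OF F UF n] by blast
  have "U \<in> F'" if F': "is_end G Bo F'" "dd F F' < inverse (real (Suc n))" for F'
  proof -
    have "C \<in> F'"
    proof (rule ccontr)
      assume "C \<notin> F'"
      then have "diffl F F' n" unfolding diffl_def using C by blast
      then have "inverse (real (Suc n)) \<le> dd F F'" by (rule dd_ge)
      then show False using F'(2) by simp
    qed
    have e: "C - U = {}" using C(2) by blast
    show "U \<in> F'" by (rule end_up[OF F'(1) \<open>C \<in> F'\<close> U]) (simp only: e bdd_empty)
  qed
  then show ?thesis by blast
qed

lemma UC_Cn: "C \<in> UC m \<Longrightarrow> C \<in> Cn m" unfolding UC_def by blast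

lemma end_iff_compl: "is_end G Bo F' \<Longrightarrow> C \<in> Cn m \<Longrightarrow> (V - C \<in> F') \<longleftrightarrow> C \<notin> F'"
proof -
  assume F': "is_end G Bo F'" and C: "C \<in> Cn m"
  have cc: "coarsely_clopen G Bo C" using comp_cc[OF C] .
  show ?thesis
  proof
    assume a: "V - C \<in> F'"
    show "C \<notin> F'"
    proof
      assume b: "C \<in> F'"
      have e: "C \<inter> (V - C) = {}" by blast
      show False by (rule end_disj[OF F' b a]) (simp only: e bdd_empty)
    qed
  next
    assume "C \<notin> F'"
    then show "V - C \<in> F'" using end_dich[OF VU F' cc] by blast
  qed
qed

definition NN where "NN F n = {F' \<in> Ends G Bo. \<forall>m\<le>n. \<not> diffl F F' m}"

lemma NN_open: "openin (ends_topology G Bo) (NN F n)"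
proof -
  define UCs where "UCs = (\<Union>m\<in>{..n}. UC m)"
  have UCsfin: "finite UCs" unfolding UCs_def using UC_fin by simp
  define g where "g C = (if C \<in> F then end_nbhd G Bo C else end_nbhd G Bo (V - C))" for C
  define Fam where "Fam = insert (end_nbhd G Bo V) (g ` UCs)"
  have eq: "NN F n = \<Inter>Fam"
  proof (intro equalityI subsetI)
    fix F' assume F': "F' \<in> NN F n"
    then have F'e: "is_end G Bo F'" and nd: "\<forall>m\<le>n. \<not> diffl F F' m" unfolding NN_def Ends_def by auto
    have "F' \<in> end_nbhd G Bo V" using end_V[OF VU F'e] F'e unfolding end_nbhd_def Ends_def by blast
    moreover have "F' \<in> g C" if C: "C \<in> UCs" for C
    proof -
      obtain m where m: "m \<le> n" "C \<in> UC m" using C unfolding UCs_def by blast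
      have eqm: "(C \<in> F) = (C \<in> F')" using nd m unfolding diffl_def by blast
      show ?thesis
      proof (cases "C \<in> F")
        case True
        then show ?thesis unfolding g_def end_nbhd_def Ends_def using eqm F'e by simp
      next
        case False
        then have "V - C \<in> F'" using end_iff_compl[OF F'e UC_Cn[OF m(2)]] eqm by simp
        then show ?thesis unfolding g_def end_nbhd_def Ends_def using False F'e by simp
      qed
    qed
    ultimately show "F' \<in> \<Inter>Fam" unfolding Fam_def by blast
  next
    fix F' assume F': "F' \<in> \<Inter>Fam"
    have "F' \<in> end_nbhd G Bo V" using F' unfolding Fam_def by blast
    then have F'e: "is_end G Bo F'" and F'E: "F' \<in> Ends G Bo" unfolding end_nbhd_def Ends_def by auto
    have "\<not> diffl F F' m" if m: "m \<le> n" for m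
    proof
      assume "diffl F F' m"
      then obtain C where C: "C \<in> UC m" "(C \<in> F) \<noteq> (C \<in> F')" unfolding diffl_def by blast
      have "C \<in> UCs" unfolding UCs_def using m C(1) by blast
      then have "F' \<in> g C" using F' unfolding Fam_def by blast
      show False
      proof (cases "C \<in> F")
        case True
        then have "C \<in> F'" using \<open>F' \<in> g C\<close> unfolding g_def end_nbhd_def by simp
        then show False using C(2) True by simp
      next
        case False
        then have "V - C \<in> F'" using \<open>F' \<in> g C\<close> unfolding g_def end_nbhd_def by simp
        then have "C \<notin> F'" using end_iff_compl[OF F'e UC_Cn[OF C(1)]] by simp
        then show False using C(2) False by simp
      qed
    qed
    then show "F' \<in> NN F n" unfolding NN_def using F'E by blast
  qed
  have "generate_topology_on {end_nbhd G Bo U | U. coarsely_clopen G Bo U} (\<Inter>Fam)"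
  proof (rule generate_topology_on_Inter)
    show "finite Fam" unfolding Fam_def using UCsfin by simp
    show "Fam \<noteq> {}" unfolding Fam_def by simp
    fix K assume K: "K \<in> Fam"
    show "generate_topology_on {end_nbhd G Bo U | U. coarsely_clopen G Bo U} K"
    proof (rule generate_topology_on.Basis)
      show "K \<in> {end_nbhd G Bo U | U. coarsely_clopen G Bo U}"
      proof (cases "K = end_nbhd G Bo V")
        case True then show ?thesis using cc_V by blast
      next
        case False
        then obtain C where C: "C \<in> UCs" "K = g C" using K unfolding Fam_def by blast
        obtain m where "C \<in> UC m" using C(1) unfolding UCs_def by blast
        then have cc: "coarsely_clopen G Bo C" using comp_cc UC_Cn by blast
        have cc2: "coarsely_clopen G Bo (V - C)" using cc_compl[OF cc] .
        show ?thesis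
        proof (cases "C \<in> F")
          case True
          then have "K = end_nbhd G Bo C" using C(2) unfolding g_def by simp
          then show ?thesis using cc by blast
        next
          case False
          then have "K = end_nbhd G Bo (V - C)" using C(2) unfolding g_def by simp
          then show ?thesis using cc2 by blast
        qed
      qed
    qed
  qed
  then show ?thesis unfolding eq ends_topology_def by (simp add: openin_topology_generated_by_iff)
qed

lemma topo_eq: "ends_topology G Bo = Metric_space.mtopology (Ends G Bo) dd"
proof -
  interpret Mt: Metric_space "Ends G Bo" dd by (rule ms)
  show ?thesis unfolding topology_eq
  proof (intro allI iffI)
    fix S assume o: "openin (ends_topology G Bo) S"
    have SE: "S \<subseteq> Ends G Bo" using openin_subset[OF o] topspace_eq by simp
    show "openin Mt.mtopology S" unfolding Mt.openin_mtopology
    proof (intro conjI allI impI)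
      show "S \<subseteq> Ends G Bo" by (rule SE)
      fix F assume FS: "F \<in> S"
      obtain U where U: "coarsely_clopen G Bo U" "F \<in> end_nbhd G Bo U" "end_nbhd G Bo U \<subseteq> S"
        using open_basic[OF o] FS by blast
      have Fe: "is_end G Bo F" "U \<in> F" using U(2) unfolding end_nbhd_def Ends_def by auto
      obtain n where n: "\<forall>F'. is_end G Bo F' \<and> dd F F' < inverse (real (Suc n)) \<longrightarrow> U \<in> F'"
        using nbhd_in_ball[OF Fe(1) U(1) Fe(2)] by blast
      have "Mt.mball F (inverse (real (Suc n))) \<subseteq> S"
      proof
        fix F' assume "F' \<in> Mt.mball F (inverse (real (Suc n)))"
        then have F': "F' \<in> Ends G Bo" "dd F F' < inverse (real (Suc n))" by auto
        then have "is_end G Bo F'" unfolding Ends_def by blast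
        then have "U \<in> F'" using n F'(2) by blast
        then have "F' \<in> end_nbhd G Bo U" using F'(1) unfolding end_nbhd_def by blast
        then show "F' \<in> S" using U(3) by blast
      qed
      moreover have "0 < inverse (real (Suc n))" by simp
      ultimately show "\<exists>r>0. Mt.mball F r \<subseteq> S" by blast
    qed
  next
    fix S assume om: "openin Mt.mtopology S"
    then have SE: "S \<subseteq> Ends G Bo" and ball: "\<And>F. F \<in> S \<Longrightarrow> \<exists>r>0. Mt.mball F r \<subseteq> S"
      unfolding Mt.openin_mtopology by auto
    have ex: "\<exists>n. NN F n \<subseteq> S" if FS: "F \<in> S" for F
    proof -
      obtain r where r: "r > 0" "Mt.mball F r \<subseteq> S" using ball[OF FS] by blast
      obtain k where k: "k > 0" "inverse (real k) < r" using ex_inverse_of_nat_less[OF r(1)] by blast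
      have "NN F (k - 1) \<subseteq> S"
      proof
        fix F' assume "F' \<in> NN F (k - 1)"
        then have F': "F' \<in> Ends G Bo" "\<forall>m\<le>k - 1. \<not> diffl F F' m" unfolding NN_def by auto
        have "dd F F' < inverse (real (Suc (k - 1)))" using dd_small F'(2) by blast
        moreover have "Suc (k - 1) = k" using k(1) by simp
        ultimately have "dd F F' < r" using k(2) by simp
        then have "F' \<in> Mt.mball F r" using F'(1) FS SE by auto
        then show "F' \<in> S" using r(2) by blast
      qed
      then show ?thesis by blast
    qed
    define nf where "nf F = (SOME n. NN F n \<subseteq> S)" for F
    have nf: "NN F (nf F) \<subseteq> S" if "F \<in> S" for F unfolding nf_def using ex[OF that] by (rule someI_ex)
    have "S = \<Union>((\<lambda>F. NN F (nf F)) ` S)"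
    proof (intro equalityI subsetI)
      fix F assume FS: "F \<in> S"
      have "F \<in> NN F (nf F)" unfolding NN_def diffl_def using FS SE by auto
      then show "F \<in> \<Union>((\<lambda>F. NN F (nf F)) ` S)" using FS by blast
    next
      fix F assume "F \<in> \<Union>((\<lambda>F. NN F (nf F)) ` S)"
      then obtain F0 where "F0 \<in> S" "F \<in> NN F0 (nf F0)" by blast
      then show "F \<in> S" using nf by blast
    qed
    moreover have "openin (ends_topology G Bo) (\<Union>((\<lambda>F. NN F (nf F)) ` S))"
      by (rule openin_Union) (use NN_open in blast)
    ultimately show "openin (ends_topology G Bo) S" by simp
  qed
qed

lemma metr: "metrizable_space (ends_topology G Bo)"
  unfolding metrizable_space_def using ms topo_eq by blast

end


context LS begin

lemma seq_case2:
  assumes B: "B \<in> Bo" and inf: "infinite {C \<in> one_components d (V - B). C \<notin> Bo}"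
  shows "\<exists>c::nat \<Rightarrow> 'a set. (\<forall>n. c n \<in> one_components d (V - B)) \<and> inj c \<and> (\<forall>m. \<Union>(c ` {m..}) \<notin> Bo)"
proof -
  obtain f :: "nat \<Rightarrow> 'a set" where f: "inj f" "range f \<subseteq> {C \<in> one_components d (V - B). C \<notin> Bo}"
    using infinite_countable_subset[OF inf] by blast
  have f1: "f n \<in> one_components d (V - B)" and f2: "f n \<notin> Bo" for n using f(2) by auto
  have "\<Union>(f ` {m..}) \<notin> Bo" for m
  proof
    assume "\<Union>(f ` {m..}) \<in> Bo"
    moreover have "f m \<subseteq> \<Union>(f ` {m..})" by auto
    ultimately have "f m \<in> Bo" by (rule bdd_sub)
    then show False using f2 by blast
  qed
  then show ?thesis using f1 f(1) by blast
qed

lemma seq_case1: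
  assumes B: "B \<in> Bo" and unb: "\<Union>{C \<in> one_components d (V - B). C \<in> Bo} \<notin> Bo"
  shows "\<exists>c::nat \<Rightarrow> 'a set. (\<forall>n. c n \<in> one_components d (V - B)) \<and> inj c \<and> (\<forall>m. \<Union>(c ` {m..}) \<notin> Bo)"
proof -
  define K where "K = {C \<in> one_components d (V - B). C \<in> Bo}"
  have KV: "\<Union>K \<subseteq> V" unfolding K_def using comp_sub by blast
  have exg: "\<exists>C. C \<in> K \<and> (\<exists>x\<in>C. d e0 x > n)" for n :: nat
  proof -
    have unbK: "\<Union>K \<notin> Bo" unfolding K_def by (rule unb)
    obtain x where x: "x \<in> \<Union>K" "d e0 x > n" using unbdd_far[OF KV unbK, of n] by (elim bexE)
    from x(1) obtain C where C: "C \<in> K" "x \<in> C" by (rule UnionE)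
    have "\<exists>x\<in>C. d e0 x > n" using C(2) x(2) by (rule bexI[rotated])
    then show ?thesis using C(1) by blast
  qed
  define g where "g n = (SOME C. C \<in> K \<and> (\<exists>x\<in>C. d e0 x > n))" for n :: nat
  have gP: "g n \<in> K \<and> (\<exists>x\<in>g n. d e0 x > n)" for n unfolding g_def using exg by (rule someI_ex)
  define K' where "K' = range g"
  have K'c: "countable K'" unfolding K'_def by simp
  have finpre: "finite {n. g n = C}" if C: "C \<in> K" for C
  proof -
    have "C \<in> Bo" using C unfolding K_def by blast
    then obtain R where R: "\<forall>x\<in>C. d e0 x \<le> R" unfolding bdd_iff by blast
    have "{n. g n = C} \<subseteq> {..<R}"
    proof
      fix n assume "n \<in> {n. g n = C}"
      then have gn: "g n = C" by simp
      have "\<exists>x\<in>g n. d e0 x > n" using gP[of n] by (rule conjunct2)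
      then obtain x where x: "x \<in> C" "d e0 x > n" unfolding gn by (elim bexE)
      have "d e0 x \<le> R" using R x(1) by (rule bspec)
      then have "n < R" using x(2) by linarith
      then show "n \<in> {..<R}" by simp
    qed
    then show ?thesis using finite_subset by blast
  qed
  have K'K: "K' \<subseteq> K" unfolding K'_def using gP by blast
  have K'inf: "infinite K'"
  proof
    assume fin: "finite K'"
    have "(UNIV :: nat set) = (\<Union>C\<in>K'. {n. g n = C})"
    proof (intro equalityI subsetI)
      fix n :: nat
      have "g n \<in> K'" unfolding K'_def by (rule rangeI)
      moreover have "n \<in> {n'. g n' = g n}" by simp
      ultimately show "n \<in> (\<Union>C\<in>K'. {n. g n = C})" by (rule UN_I)
    qed simp
    moreover have "finite (\<Union>C\<in>K'. {n. g n = C})"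
    proof (rule finite_UN_I[OF fin])
      fix C assume "C \<in> K'"
      then show "finite {n. g n = C}" using finpre K'K by blast
    qed
    ultimately show False by simp
  qed
  define c where "c = from_nat_into K'"
  have bij: "bij_betw c UNIV K'" unfolding c_def by (rule bij_betw_from_nat_into[OF K'c K'inf])
  then have cinj: "inj c" and crange: "range c = K'" unfolding bij_betw_def by (simp_all add: inj_on_def)
  have c1: "c n \<in> one_components d (V - B)" for n
  proof -
    have "c n \<in> K'" using crange by blast
    then show ?thesis using K'K unfolding K_def by blast
  qed
  have c3: "\<Union>(c ` {m..}) \<notin> Bo" for m
  proof (rule far_unbdd)
    fix R
    define bad where "bad = (\<Union>C\<in>c ` {..<m}. {n. g n = C})"
    have cK: "c ` {..<m} \<subseteq> K" using crange K'K by blast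
    have "finite bad" unfolding bad_def
    proof (rule finite_UN_I)
      show "finite (c ` {..<m})" by simp
      fix C assume "C \<in> c ` {..<m}"
      then show "finite {n. g n = C}" using finpre cK by blast
    qed
    then have "finite (bad \<union> {..<R})" by simp
    then obtain n where n: "n \<notin> bad \<union> {..<R}" using ex_new_if_finite[OF infinite_UNIV_nat] by blast
    have "g n \<in> K'" unfolding K'_def by (rule rangeI)
    then have "g n \<in> range c" using crange by simp
    then obtain j where j: "g n = c j" by (rule rangeE)
    have "j \<ge> m"
    proof (rule ccontr)
      assume "\<not> j \<ge> m"
      then have "c j \<in> c ` {..<m}" by simp
      then have "n \<in> {n'. g n' = c j}" using j by simp
      then have "n \<in> bad" unfolding bad_def using \<open>c j \<in> c ` {..<m}\<close> by (rule UN_I[rotated])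
      then show False using n by blast
    qed
    have "\<exists>x\<in>g n. d e0 x > n" using gP[of n] by (rule conjunct2)
    then obtain x where x: "x \<in> g n" "d e0 x > n" by (elim bexE)
    have "c j \<in> c ` {m..}" using \<open>j \<ge> m\<close> by simp
    moreover have "x \<in> c j" using x(1) j by simp
    ultimately have "x \<in> \<Union>(c ` {m..})" by (rule UnionI)
    moreover have "n \<ge> R" using n by simp
    then have "d e0 x > R" using x(2) by linarith
    ultimately show "\<exists>x\<in>\<Union>(c ` {m..}). d e0 x > R" by blast
  qed
  show ?thesis using c1 cinj c3 by blast
qed

end

theorem corollary7p10:
  fixes G :: "('a, 'b) monoid_scheme" and d :: "'a \<Rightarrow> 'a \<Rightarrow> nat" and Bo :: "'a set set"
  assumes "group G"
    and "cayley_graph_metric G d"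
    and "Bo = metric_bornology G d"
  shows "\<not> metrizable_space (ends_topology G Bo) \<longleftrightarrow>
    ((\<exists>B\<in>Bo. \<Union>{C \<in> one_components d (carrier G - B). C \<in> Bo} \<notin> Bo) \<or>
     (\<exists>B\<in>Bo. infinite {C \<in> one_components d (carrier G - B). C \<notin> Bo}))"
proof -
  obtain E where E: "E \<subseteq> carrier G \<times> carrier G" "sym E" "irrefl E"
    "\<forall>x\<in>carrier G. \<forall>y\<in>carrier G. (x, y) \<in> E\<^sup>*"
    "\<forall>x\<in>carrier G. \<forall>y\<in>carrier G. d x y = graph_dist E x y"
    and dinv: "\<forall>g\<in>carrier G. \<forall>x\<in>carrier G. \<forall>y\<in>carrier G. d (g \<otimes>\<^bsub>G\<^esub> x) (g \<otimes>\<^bsub>G\<^esub> y) = d x y"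
    using assms(2) unfolding cayley_graph_metric_def by blast
  interpret L: LS G d E
    by (rule LS.intro) (use assms(1) E dinv in auto)
  have Bo: "Bo = metric_bornology G d" by (rule assms(3))
  have compsub: "\<And>C B. C \<in> one_components d (carrier G - B) \<Longrightarrow> C \<subseteq> carrier G"
  proof -
    fix C B assume "C \<in> one_components d (carrier G - B)"
    then have "C \<subseteq> carrier G - B" by (rule L.comp_sub)
    then show "C \<subseteq> carrier G" by blast
  qed
  have main: "\<not> metrizable_space (ends_topology G (metric_bornology G d)) \<longleftrightarrow>
    ((\<exists>B\<in>metric_bornology G d. \<Union>{C \<in> one_components d (carrier G - B). C \<in> metric_bornology G d} \<notin> metric_bornology G d) \<or>
     (\<exists>B\<in>metric_bornology G d. infinite {C \<in> one_components d (carrier G - B). C \<notin> metric_bornology G d}))"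
  proof (cases "carrier G \<in> metric_bornology G d")
    case True
    have allb: "X \<in> metric_bornology G d" if "X \<subseteq> carrier G" for X using L.bdd_sub[OF True that] .
    have nb: "end_nbhd G (metric_bornology G d) U = {}" for U
    proof -
      have "F \<notin> Ends G (metric_bornology G d) \<or> U \<notin> F" for F
      proof (rule ccontr)
        assume "\<not> (F \<notin> Ends G (metric_bornology G d) \<or> U \<notin> F)"
        then have F: "is_end G (metric_bornology G d) F" "U \<in> F" unfolding Ends_def by auto
        have "coarsely_clopen G (metric_bornology G d) U \<and> U \<notin> metric_bornology G d \<and> U \<subseteq> carrier G"
          by (rule L.end_mem[OF F])
        then show False using allb by blast
      qed
      then show ?thesis unfolding end_nbhd_def by blast
    qed
    have "topspace (ends_topology G (metric_bornology G d)) = {}"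
      unfolding ends_topology_def topology_generated_by_topspace using nb by blast
    then have "ends_topology G (metric_bornology G d) = trivial_topology" by simp
    then have m: "metrizable_space (ends_topology G (metric_bornology G d))" using empty_metrizable_space by simp
    have c1: "\<Union>{C \<in> one_components d (carrier G - B). C \<in> metric_bornology G d} \<in> metric_bornology G d" for B
    proof (rule allb)
      show "\<Union>{C \<in> one_components d (carrier G - B). C \<in> metric_bornology G d} \<subseteq> carrier G"
      proof
        fix x assume "x \<in> \<Union>{C \<in> one_components d (carrier G - B). C \<in> metric_bornology G d}"
        then obtain C where C: "C \<in> one_components d (carrier G - B)" "x \<in> C" by blast
        show "x \<in> carrier G" using compsub[OF C(1)] C(2) by blast
      qed
    qed
    have c2: "{C \<in> one_components d (carrier G - B). C \<notin> metric_bornology G d} = {}" for B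
    proof -
      have "C \<in> metric_bornology G d" if "C \<in> one_components d (carrier G - B)" for C
        using allb[OF compsub[OF that]] .
      then show ?thesis by blast
    qed
    have c2': "finite {C \<in> one_components d (carrier G - B). C \<notin> metric_bornology G d}" for B
      unfolding c2 by (rule finite.emptyI)
    show ?thesis using m c1 c2' by blast
  next
    case False
    show ?thesis
    proof
      assume nm: "\<not> metrizable_space (ends_topology G (metric_bornology G d))"
      show "(\<exists>B\<in>metric_bornology G d. \<Union>{C \<in> one_components d (carrier G - B). C \<in> metric_bornology G d} \<notin> metric_bornology G d) \<or>
        (\<exists>B\<in>metric_bornology G d. infinite {C \<in> one_components d (carrier G - B). C \<notin> metric_bornology G d})"
      proof (rule ccontr)
        assume na: "\<not> ?thesis"
        have h1: "\<forall>B\<in>metric_bornology G d. \<Union>{C \<in> one_components d (carrier G - B). C \<in> metric_bornology G d} \<in> metric_bornology G d"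
          using na by blast
        have h2: "\<forall>B\<in>metric_bornology G d. finite {C \<in> one_components d (carrier G - B). C \<notin> metric_bornology G d}"
          using na by blast
        interpret N: LSN G d E
          by (rule LSN.intro[OF L.LS_axioms]) (rule LSN_axioms.intro[OF False h1 h2])
        have "metrizable_space (ends_topology G (metric_bornology G d))" by (rule N.metr)
        then show False using nm by simp
      qed
    next
      assume "(\<exists>B\<in>metric_bornology G d. \<Union>{C \<in> one_components d (carrier G - B). C \<in> metric_bornology G d} \<notin> metric_bornology G d) \<or>
        (\<exists>B\<in>metric_bornology G d. infinite {C \<in> one_components d (carrier G - B). C \<notin> metric_bornology G d})"
      then obtain B where B: "B \<in> metric_bornology G d" and
        cs: "\<Union>{C \<in> one_components d (carrier G - B). C \<in> metric_bornology G d} \<notin> metric_bornology G d \<or>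
             infinite {C \<in> one_components d (carrier G - B). C \<notin> metric_bornology G d}"
        by blast
      have "\<exists>c::nat \<Rightarrow> 'a set. (\<forall>n. c n \<in> one_components d (carrier G - B)) \<and> inj c \<and> (\<forall>m. \<Union>(c ` {m..}) \<notin> metric_bornology G d)"
        using cs
      proof
        assume "\<Union>{C \<in> one_components d (carrier G - B). C \<in> metric_bornology G d} \<notin> metric_bornology G d"
        then show ?thesis by (rule L.seq_case1[OF B])
      next
        assume "infinite {C \<in> one_components d (carrier G - B). C \<notin> metric_bornology G d}"
        then show ?thesis by (rule L.seq_case2[OF B])
      qed
      then obtain c :: "nat \<Rightarrow> 'a set" where c: "\<forall>n. c n \<in> one_components d (carrier G - B)" "inj c"
        "\<forall>m. \<Union>(c ` {m..}) \<notin> metric_bornology G d"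
        by blast
      have c1: "\<And>n. c n \<in> one_components d (carrier G - B)" using c(1) by blast
      have c3: "\<And>m. \<Union>(c ` {m..}) \<notin> metric_bornology G d" using c(3) by blast
      show "\<not> metrizable_space (ends_topology G (metric_bornology G d))"
        by (rule L.not_metr[OF False B c1 c(2) c3])
    qed
  qed
  then show ?thesis unfolding Bo .
qed


end
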